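(* Let $\kappa>\frac12$. For every $s\ge0$ and every probability measure $\mu$ on $(-1,1)$, $$\lim_{t\to\infty}\mathbb{P}_{\mu,s}(\tau_X>t)=\mathbb{P}_{\mu,s}(\tau_X=\infty)>0.$$
   Context: Let $\kappa>0$. For $s\ge 0$ and $x\in\mathbb{R}$, let $\mathbb{P}_{x,s}$ be a probability measure under which $(X_t)_{t\ge s}$ is given by $X_t=\frac{x(s+1)^\kappa+W_{t-s}}{(t+1)^\kappa}$, where $(W_u)_{u\ge0}$ is a standard one-dimensional Brownian motion started at $0$ (so $X_t=B_t/(t+1)^\kappa$ with $B_s=x(s+1)^\kappa$). Let $\tau_X:=\inf\{t\ge s:|X_t|=1\}$ (with $\inf\emptyset=\infty$). For a probability measure $\mu$ on $(-1,1)$, $\mathbb{P}_{\mu,s}:=\int\mathbb{P}_{x,s}\,\mu(dx)$. *)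

theory Defs
  imports "HOL-Probability.Probability"
begin

definition std_BM :: "'a measure \<Rightarrow> (real \<Rightarrow> 'a \<Rightarrow> real) \<Rightarrow> bool" where
  "std_BM M W \<longleftrightarrow>
     prob_space M \<and>
     (\<forall>t\<ge>0. W t \<in> borel_measurable M) \<and>
     (\<forall>\<omega>\<in>space M. W 0 \<omega> = 0 \<and> continuous_on {0..} (\<lambda>u. W u \<omega>)) \<and>
     (\<forall>s t. 0 \<le> s \<and> s < t \<longrightarrow>
        distributed M lborel (\<lambda>\<omega>. W t \<omega> - W s \<omega>)
          (\<lambda>x. ennreal (normal_density 0 (sqrt (t - s)) x))) \<and>
     (\<forall>ts :: real list. sorted ts \<and> (\<forall>x\<in>set ts. 0 \<le> x) \<longrightarrow>
        prob_space.indep_vars M (\<lambda>_. borel)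
          (\<lambda>i \<omega>. W (ts ! Suc i) \<omega> - W (ts ! i) \<omega>) {..<length ts - 1})"

definition Xproc :: "real \<Rightarrow> real \<Rightarrow> real \<Rightarrow> (real \<Rightarrow> 'a \<Rightarrow> real) \<Rightarrow> real \<Rightarrow> 'a \<Rightarrow> real" where
  "Xproc \<kappa> s x W t \<omega> = (x * (s + 1) powr \<kappa> + W (t - s) \<omega>) / (t + 1) powr \<kappa>"

definition hit_time :: "real \<Rightarrow> real \<Rightarrow> real \<Rightarrow> (real \<Rightarrow> 'a \<Rightarrow> real) \<Rightarrow> 'a \<Rightarrow> ereal" where
  "hit_time \<kappa> s x W \<omega> =
     (let S = {t. t \<ge> s \<and> \<bar>Xproc \<kappa> s x W t \<omega>\<bar> = 1}
      in if S = {} then \<infinity> else ereal (Inf S))"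

definition Pmix :: "'a measure \<Rightarrow> real measure \<Rightarrow> (real \<Rightarrow> 'a \<Rightarrow> bool) \<Rightarrow> real" where
  "Pmix M \<mu> A = (\<integral>x. measure M {\<omega>\<in>space M. A x \<omega>} \<partial>\<mu>)"

end

theory Submission
  imports Defs
begin

lemma chain_det:
  fixes w :: "real \<Rightarrow> real" and c :: "nat \<Rightarrow> real"
  assumes "\<And>l i. l \<le> r \<Longrightarrow> i < 2^l \<Longrightarrow>
     \<bar>w (t + real (Suc i) * L / 2^l) - w (t + real i * L / 2^l)\<bar> \<le> c l"
    and "i \<le> 2^r"
  shows "\<bar>w (t + real i * L / 2^r) - w t\<bar> \<le> (\<Sum>l\<le>r. c l)"
  using assms
proof (induction r arbitrary: i)
  case 0
  have "\<bar>w (t + L) - w t\<bar> \<le> c 0" using "0.prems"(1)[of 0 0] by simp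
  then have c0: "0 \<le> c 0" by (meson abs_ge_zero order_trans)
  show ?case
  proof (cases "i = 0")
    case True then show ?thesis using c0 by simp
  next
    case False then have "i = 1" using "0.prems"(2) by simp
    then show ?thesis using "0.prems"(1)[of 0 0] by simp
  qed
next
  case (Suc r)
  have IH: "\<And>j. j \<le> 2^r \<Longrightarrow> \<bar>w (t + real j * L / 2^r) - w t\<bar> \<le> (\<Sum>l\<le>r. c l)"
    using Suc.IH Suc.prems(1) by (meson le_Suc_eq)
  have "\<bar>w (t + 1 * L / 2^Suc r) - w (t + 0 * L / 2^Suc r)\<bar> \<le> c (Suc r)"
    using Suc.prems(1)[of "Suc r" 0] by simp
  then have cS: "0 \<le> c (Suc r)" by (meson abs_ge_zero order_trans)
  have sum: "(\<Sum>l\<le>Suc r. c l) = (\<Sum>l\<le>r. c l) + c (Suc r)" by simp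
  show ?case
  proof (cases "even i")
    case True
    then obtain j where j: "i = 2 * j" by blast
    with Suc.prems(2) have "j \<le> 2^r" by simp
    moreover have "t + real i * L / 2 ^ Suc r = t + real j * L / 2^r" using j by (simp add: field_simps)
    ultimately show ?thesis using IH[of j] cS sum by simp
  next
    case False
    then obtain j where j: "i = 2 * j + 1" using oddE by blast
    with Suc.prems(2) have jl: "j < 2^r" by simp
    have p1: "t + real (2*j) * L / 2 ^ Suc r = t + real j * L / 2^r" by (simp add: field_simps)
    have A: "\<bar>w (t + real (Suc (2*j)) * L / 2^Suc r) - w (t + real (2*j) * L / 2^Suc r)\<bar> \<le> c (Suc r)"
      using Suc.prems(1)[of "Suc r" "2*j"] jl by simp
    have B: "\<bar>w (t + real j * L / 2^r) - w t\<bar> \<le> (\<Sum>l\<le>r. c l)" using IH[of j] jl by simp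
    have eq: "t + real i * L / 2 ^ Suc r = t + real (Suc (2*j)) * L / 2^Suc r" using j by simp
    have e: "w (t + real i * L / 2 ^ Suc r) - w t = (w (t + real (Suc (2*j)) * L / 2^Suc r) - w (t + real (2*j) * L / 2^Suc r)) + (w (t + real j * L / 2^r) - w t)"
      by (simp only: eq p1)
    show ?thesis unfolding e sum using A B abs_triangle_ineq by (smt (verit))
  qed
qed

lemma dyadic_closed:
  fixes g :: "real \<Rightarrow> real"
  assumes ab: "a \<le> b" and cont: "continuous_on {a..b} g"
    and grid: "\<And>m i. m \<ge> m0 \<Longrightarrow> i \<le> 2^m \<Longrightarrow> g (a + real i * (b - a) / 2^m) \<le> 0"
    and u: "u \<in> {a..b}"
  shows "g u \<le> 0"
proof (cases "a = b")
  case True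
  then have "u = a" using u by auto
  then show ?thesis using grid[of m0 0] by simp
next
  case False
  then have ba: "b - a > 0" using ab by simp
  define y where "y m = (u - a) * 2^m / (b - a)" for m :: nat
  define p where "p m = a + real (nat \<lfloor>y m\<rfloor>) * (b - a) / 2^m" for m :: nat
  have y0: "0 \<le> y m" for m using u ba by (auto simp: y_def)
  have yb: "y m \<le> 2^m" for m using u ba by (auto simp: y_def field_simps)
  have fl: "real (nat \<lfloor>y m\<rfloor>) = of_int \<lfloor>y m\<rfloor>" for m using y0[of m] by simp
  have p_le: "p m \<le> u" for m
  proof -
    have "real (nat \<lfloor>y m\<rfloor>) * (b - a) / 2^m \<le> y m * (b - a) / 2^m"
      using fl[of m] ba by (intro divide_right_mono mult_right_mono) auto
    also have "\<dots> = u - a" using ba by (simp add: y_def)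
    finally show ?thesis by (simp add: p_def)
  qed
  have p_ge: "u - (b - a) / 2^m \<le> p m" for m
  proof -
    have "(y m - 1) * (b - a) / 2^m \<le> real (nat \<lfloor>y m\<rfloor>) * (b - a) / 2^m"
      using fl[of m] ba by (intro divide_right_mono mult_right_mono) auto
    moreover have "(y m - 1) * (b - a) / 2^m = u - a - (b - a) / 2^m" using ba
      by (simp add: y_def field_simps)
    ultimately show ?thesis by (simp add: p_def)
  qed
  have pab: "p m \<in> {a..b}" for m
  proof -
    have "0 \<le> real (nat \<lfloor>y m\<rfloor>) * (b - a) / 2^m" using ba by simp
    then show ?thesis using p_le[of m] u by (auto simp: p_def)
  qed
  have lim0: "(\<lambda>m. (b - a) / 2^m) \<longlonglongrightarrow> 0" by (rule LIMSEQ_divide_realpow_zero) simp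
  have plim: "p \<longlonglongrightarrow> u"
  proof (rule tendsto_sandwich[where f="\<lambda>m. u - (b - a) / 2^m" and h="\<lambda>m. u"])
    show "\<forall>\<^sub>F n in sequentially. u - (b - a) / 2 ^ n \<le> p n" using p_ge by simp
    show "\<forall>\<^sub>F n in sequentially. p n \<le> u" using p_le by simp
    show "(\<lambda>m. u - (b - a) / 2^m) \<longlonglongrightarrow> u" using tendsto_diff[OF tendsto_const lim0, of u] by simp
  qed simp
  have "(\<lambda>m. g (p m)) \<longlonglongrightarrow> g u"
    by (rule continuous_on_tendsto_compose[OF cont plim u]) (use pab in auto)
  moreover have "\<forall>m\<ge>m0. g (p m) \<le> 0"
  proof (intro allI impI)
    fix m assume "m0 \<le> m"
    have "real (nat \<lfloor>y m\<rfloor>) \<le> 2^m" using fl[of m] of_int_floor_le[of "y m"] yb[of m] by linarith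
    then have "nat \<lfloor>y m\<rfloor> \<le> 2^m" by (metis of_nat_le_iff of_nat_numeral of_nat_power)
    then show "g (p m) \<le> 0" unfolding p_def using grid \<open>m0 \<le> m\<close> by blast
  qed
  ultimately show ?thesis using LIMSEQ_le_const2 by blast
qed

locale bm =
  fixes M :: "'a measure" and W :: "real \<Rightarrow> 'a \<Rightarrow> real"
  assumes bm: "std_BM M W"
begin

sublocale prob_space M using bm by (simp add: std_BM_def)

lemma W_meas: "0 \<le> t \<Longrightarrow> W t \<in> borel_measurable M"
  using bm by (simp add: std_BM_def)
lemma W0: "\<omega> \<in> space M \<Longrightarrow> W 0 \<omega> = 0"
  using bm by (simp add: std_BM_def)
lemma Wcont: "\<omega> \<in> space M \<Longrightarrow> continuous_on {0..} (\<lambda>u. W u \<omega>)"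
  using bm by (simp add: std_BM_def)
lemma Wdist: "0 \<le> s \<Longrightarrow> s < t \<Longrightarrow> distributed M lborel (\<lambda>\<omega>. W t \<omega> - W s \<omega>)
          (\<lambda>x. ennreal (normal_density 0 (sqrt (t - s)) x))"
  using bm by (simp add: std_BM_def)
lemma Windep: "sorted ts \<Longrightarrow> (\<forall>x\<in>set ts. 0 \<le> x) \<Longrightarrow>
   indep_vars (\<lambda>_. borel) (\<lambda>i \<omega>. W (ts ! Suc i) \<omega> - W (ts ! i) \<omega>) {..<length ts - 1}"
  using bm by (simp add: std_BM_def)

lemma tail4:
  assumes s: "0 \<le> s" "s \<le> t" and l: "0 < l"
  shows "prob {\<omega>\<in>space M. l < \<bar>W t \<omega> - W s \<omega>\<bar>} \<le> 3 * (t - s)^2 / l^4"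
proof (cases "s = t")
  case True then show ?thesis using l by (simp add: not_less)
next
  case False
  then have st: "s < t" using s by simp
  define \<sigma> where "\<sigma> = sqrt (t - s)"
  have \<sigma>: "0 < \<sigma>" "\<sigma>^2 = t - s" using st by (auto simp: \<sigma>_def)
  define X where "X = (\<lambda>\<omega>. W t \<omega> - W s \<omega>)"
  have D: "distributed M lborel X (\<lambda>x. ennreal (normal_density 0 \<sigma> x))"
    unfolding X_def \<sigma>_def using Wdist s st by simp
  define A where "A = {x::real. l < \<bar>x\<bar>}"
  have A: "A \<in> sets lborel" unfolding A_def by measurable
  have set: "{\<omega>\<in>space M. l < \<bar>W t \<omega> - W s \<omega>\<bar>} = X -` A \<inter> space M"
    by (auto simp: X_def A_def)
  have "emeasure M (X -` A \<inter> space M) = (\<integral>\<^sup>+x. ennreal (normal_density 0 \<sigma> x) * indicator A x \<partial>lborel)"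
    by (rule distributed_emeasure[OF D A])
  also have "\<dots> \<le> (\<integral>\<^sup>+x. ennreal (normal_density 0 \<sigma> x * (x - 0)^(2*2) / l^4) \<partial>lborel)"
  proof (intro nn_integral_mono)
    fix x
    show "ennreal (normal_density 0 \<sigma> x) * indicator A x \<le> ennreal (normal_density 0 \<sigma> x * (x - 0)^(2*2) / l^4)"
    proof (cases "x \<in> A")
      case True
      then have "l < \<bar>x\<bar>" by (simp add: A_def)
      then have "l^4 \<le> \<bar>x\<bar>^4" using l by (intro power_mono) auto
      then have "1 \<le> x^4 / l^4" using l by (simp add: power_abs)
      then have "normal_density 0 \<sigma> x * 1 \<le> normal_density 0 \<sigma> x * (x^4 / l^4)"
        by (intro mult_left_mono) auto
      then show ?thesis using True by (simp add: ennreal_leI)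
    qed simp
  qed
  also have "\<dots> = ennreal (3 * \<sigma>^4 / l^4)"
  proof -
    have hb: "has_bochner_integral lborel (\<lambda>x. normal_density 0 \<sigma> x * (x - 0)^(2*2)) (fact (2 * 2) / ((2 / \<sigma>\<^sup>2)^2 * fact 2))"
      by (rule normal_moment_even) (use \<sigma> in simp)
    have val: "fact (2 * 2) / ((2 / \<sigma>\<^sup>2)^2 * fact 2) = (3 * \<sigma>^4 :: real)"
      using \<sigma> by (simp add: fact_numeral power2_eq_square field_simps power4_eq_xxxx)
    have hb1: "has_bochner_integral lborel (\<lambda>x. normal_density 0 \<sigma> x * (x - 0)^(2*2)) (3 * \<sigma>^4)"
      using hb val by simp
    have hb2: "has_bochner_integral lborel (\<lambda>x. normal_density 0 \<sigma> x * (x - 0)^(2*2) / l^4) (3 * \<sigma>^4 / l^4)"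
      using has_bochner_integral_divide_zero[OF hb1, of "l^4"] by simp
    have "(\<integral>\<^sup>+x. ennreal (normal_density 0 \<sigma> x * (x - 0)^(2*2) / l^4) \<partial>lborel)
          = ennreal (integral\<^sup>L lborel (\<lambda>x. normal_density 0 \<sigma> x * (x - 0)^(2*2) / l^4))"
      using hb2 by (intro nn_integral_eq_integral) (auto simp: has_bochner_integral_iff)
    then show ?thesis using hb2 by (simp add: has_bochner_integral_iff)
  qed
  finally have "emeasure M (X -` A \<inter> space M) \<le> ennreal (3 * \<sigma>^4 / l^4)" .
  then have "prob (X -` A \<inter> space M) \<le> 3 * \<sigma>^4 / l^4"
    using l by (simp add: emeasure_eq_measure ennreal_le_iff)
  moreover have "\<sigma>^4 = (t - s)^2" using \<sigma> by (metis numeral_Bit0 power_add power2_eq_square numeral_times_numeral semiring_norm(12) semiring_norm(13) power_mult)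
  ultimately show ?thesis using set by simp
qed

lemma gauss_lower:
  assumes s: "0 \<le> s" "s < t" and e: "0 < e"
  shows "prob {\<omega>\<in>space M. \<bar>W t \<omega> - W s \<omega> - d\<bar> \<le> e} \<ge>
          2 * e * (1 / sqrt (2 * pi * (t - s)) * exp (- ((abs d + e)^2) / (2 * (t - s))))"
proof -
  define \<sigma> where "\<sigma> = sqrt (t - s)"
  have \<sigma>: "0 < \<sigma>" "\<sigma>^2 = t - s" using s by (auto simp: \<sigma>_def)
  define X where "X = (\<lambda>\<omega>. W t \<omega> - W s \<omega>)"
  have D: "distributed M lborel X (\<lambda>x. ennreal (normal_density 0 \<sigma> x))"
    unfolding X_def \<sigma>_def using Wdist s by simp
  define A where "A = {d - e .. d + e}"
  have A: "A \<in> sets lborel" unfolding A_def by measurable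
  have set: "{\<omega>\<in>space M. \<bar>W t \<omega> - W s \<omega> - d\<bar> \<le> e} = X -` A \<inter> space M"
    by (auto simp: X_def A_def)
  define c where "c = 1 / sqrt (2 * pi * (t - s)) * exp (- ((abs d + e)^2) / (2 * (t - s)))"
  have c0: "0 \<le> c" unfolding c_def using s by (intro mult_nonneg_nonneg) auto
  have "ennreal (c * (2 * e)) = (\<integral>\<^sup>+x. ennreal c * indicator A x \<partial>lborel)"
    using A e c0 by (simp add: nn_integral_cmult_indicator A_def ennreal_mult)
  also have "\<dots> \<le> (\<integral>\<^sup>+x. ennreal (normal_density 0 \<sigma> x) * indicator A x \<partial>lborel)"
  proof (intro nn_integral_mono)
    fix x
    show "ennreal c * indicator A x \<le> ennreal (normal_density 0 \<sigma> x) * indicator A x"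
    proof (cases "x \<in> A")
      case True
      then have "\<bar>x\<bar> \<le> abs d + e" by (auto simp: A_def)
      then have "x^2 \<le> (abs d + e)^2" by (metis abs_ge_zero power2_abs power_mono)
      then have "- ((abs d + e)^2) / (2 * (t - s)) \<le> - (x^2) / (2 * (t - s))"
        using s by (intro divide_right_mono) auto
      then have "exp (- ((abs d + e)^2) / (2 * (t - s))) \<le> exp (- (x^2) / (2 * (t - s)))"
        by simp
      then have "c \<le> normal_density 0 \<sigma> x"
        unfolding c_def normal_density_def \<sigma>(2) using s by (intro mult_left_mono) auto
      then show ?thesis using True by (simp add: ennreal_leI)
    qed simp
  qed
  also have "\<dots> = emeasure M (X -` A \<inter> space M)"
    by (rule distributed_emeasure[OF D A, symmetric])
  finally have "c * (2 * e) \<le> prob (X -` A \<inter> space M)"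
    by (simp add: emeasure_eq_measure ennreal_le_iff)
  then show ?thesis using set by (simp add: c_def mult_ac)
qed

end

lemma gp5: "0 \<le> (q::real) \<Longrightarrow> (1 - q) / (1 - 5000/6561) \<le> 5"
  by (simp add: field_simps)

context bm
begin

lemma Wd_meas: "0 \<le> a \<Longrightarrow> 0 \<le> b \<Longrightarrow> (\<lambda>\<omega>. W a \<omega> - W b \<omega>) \<in> borel_measurable M"
  using W_meas by measurable

lemma ev_gt: "0 \<le> a \<Longrightarrow> 0 \<le> b \<Longrightarrow> {\<omega>\<in>space M. c < \<bar>W a \<omega> - W b \<omega>\<bar>} \<in> events"
proof -
  assume "0 \<le> a" "0 \<le> b"
  note Wd_meas[OF this, measurable]
  show ?thesis by measurable
qed

lemma ev_le: "0 \<le> a \<Longrightarrow> 0 \<le> b \<Longrightarrow> {\<omega>\<in>space M. \<bar>W a \<omega> - W b \<omega> - d\<bar> \<le> c} \<in> events"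
proof -
  assume "0 \<le> a" "0 \<le> b"
  note Wd_meas[OF this, measurable]
  show ?thesis by measurable
qed

lemma maxbound:
  assumes t: "0 \<le> t" and L: "0 < L" and l: "0 < l"
  shows "prob {\<omega>\<in>space M. \<exists>i\<le>2^r. l < \<bar>W (t + real i * L / 2^r) \<omega> - W t \<omega>\<bar>} \<le> 150000 * L^2 / l^4"
proof -
  define c where "c k = l * 9^k / (10 * 10^k)" for k :: nat
  define B where "B k i = {\<omega>\<in>space M. c k < \<bar>W (t + real (Suc i) * L / 2^k) \<omega> - W (t + real i * L / 2^k) \<omega>\<bar>}" for k i :: nat
  have csum: "(\<Sum>k\<le>r. c k) \<le> l"
  proof -
    have "(\<Sum>k\<le>r. c k) = l / 10 * (\<Sum>k\<le>r. (9/10::real)^k)"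
      by (simp add: c_def sum_distrib_left power_divide)
    also have "(\<Sum>k\<le>r. (9/10::real)^k) = (1 - (9/10)^(Suc r)) / (1 - 9/10)"
      using sum_gp_strict[of "9/10::real" "Suc r"] by (simp add: lessThan_Suc_atMost)
    also have "\<dots> \<le> 10" by simp
    finally show ?thesis using l by (simp add: mult_left_le)
  qed
  have sub: "{\<omega>\<in>space M. \<exists>i\<le>2^r. l < \<bar>W (t + real i * L / 2^r) \<omega> - W t \<omega>\<bar>} \<subseteq> (\<Union>k\<le>r. \<Union>i<2^k. B k i)"
  proof
    fix \<omega> assume \<omega>: "\<omega> \<in> {\<omega>\<in>space M. \<exists>i\<le>2^r. l < \<bar>W (t + real i * L / 2^r) \<omega> - W t \<omega>\<bar>}"
    then obtain i where i: "i \<le> 2^r" "l < \<bar>W (t + real i * L / 2^r) \<omega> - W t \<omega>\<bar>" by auto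
    show "\<omega> \<in> (\<Union>k\<le>r. \<Union>i<2^k. B k i)"
    proof (rule ccontr)
      assume "\<omega> \<notin> (\<Union>k\<le>r. \<Union>i<2^k. B k i)"
      then have "\<And>k i. k \<le> r \<Longrightarrow> i < 2^k \<Longrightarrow>
          \<bar>W (t + real (Suc i) * L / 2^k) \<omega> - W (t + real i * L / 2^k) \<omega>\<bar> \<le> c k"
        using \<omega> by (auto simp: B_def not_less)
      from chain_det[of r "\<lambda>u. W u \<omega>" t L c i, OF this i(1)]
      have "\<bar>W (t + real i * L / 2^r) \<omega> - W t \<omega>\<bar> \<le> (\<Sum>k\<le>r. c k)" by blast
      then show False using i(2) csum by linarith
    qed
  qed
  have Bev: "B k i \<in> events" for k i
    unfolding B_def using t L by (intro ev_gt) auto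
  have Bp: "prob (B k i) \<le> 30000 * L^2 / l^4 * (2500/6561)^k" for k i
  proof -
    have c0: "0 < c k" using l by (simp add: c_def)
    have "prob (B k i) \<le> 3 * ((t + real (Suc i) * L / 2^k) - (t + real i * L / 2^k))^2 / (c k)^4"
      unfolding B_def using t L c0 by (intro tail4) (auto simp: field_simps)
    also have "\<dots> = 3 * (L / 2^k)^2 / (c k)^4" by (simp add: field_simps)
    also have "\<dots> = 30000 * L^2 / l^4 * (2500/6561)^k"
    proof -
      have e1: "((2::real)^k)^2 = 4^k"
      proof -
        have "((2::real)^k)^2 = (2^2)^k" by (metis power_mult mult.commute)
        then show ?thesis by simp
      qed
      have e2: "((9::real)^k)^4 = 6561^k"
      proof -
        have "((9::real)^k)^4 = (9^4)^k" by (metis power_mult mult.commute)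
        then show ?thesis by simp
      qed
      have e3: "((10::real)^k)^4 = 10000^k"
      proof -
        have "((10::real)^k)^4 = (10^4)^k" by (metis power_mult mult.commute)
        then show ?thesis by simp
      qed
      have e4: "(10000::real)^k = 4^k * 2500^k" by (simp flip: power_mult_distrib)
      have c4: "(c k)^4 = l^4 * 6561^k / (10000 * 10000^k)"
        unfolding c_def by (simp add: power_divide power_mult_distrib e2 e3)
      show ?thesis using l
        by (simp only: c4) (simp add: power_divide e1 e4 field_simps)
    qed
    finally show ?thesis .
  qed
  have ev_sub: "{\<omega>\<in>space M. \<exists>i\<le>2^r. l < \<bar>W (t + real i * L / 2^r) \<omega> - W t \<omega>\<bar>} \<in> events"
  proof -
    have "{\<omega>\<in>space M. \<exists>i\<le>2^r. l < \<bar>W (t + real i * L / 2^r) \<omega> - W t \<omega>\<bar>}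
        = (\<Union>i\<in>{..2^r}. {\<omega>\<in>space M. l < \<bar>W (t + real i * L / 2^r) \<omega> - W t \<omega>\<bar>})" by auto
    also have "\<dots> \<in> events" using t L by (intro sets.finite_UN ev_gt) auto
    finally show ?thesis .
  qed
  have "prob {\<omega>\<in>space M. \<exists>i\<le>2^r. l < \<bar>W (t + real i * L / 2^r) \<omega> - W t \<omega>\<bar>} \<le> prob (\<Union>k\<le>r. \<Union>i<2^k. B k i)"
    using sub Bev by (intro finite_measure_mono) auto
  also have "\<dots> \<le> (\<Sum>k\<le>r. prob (\<Union>i<2^k. B k i))"
    using Bev by (intro finite_measure_subadditive_finite) auto
  also have "\<dots> \<le> (\<Sum>k\<le>r. \<Sum>i<2^k. prob (B k i))"
    using Bev by (intro sum_mono finite_measure_subadditive_finite) auto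
  also have "\<dots> \<le> (\<Sum>k\<le>r. \<Sum>i<(2::nat)^k. 30000 * L^2 / l^4 * (2500/6561)^k)"
    by (intro sum_mono Bp)
  also have "\<dots> = 30000 * L^2 / l^4 * (\<Sum>k\<le>r. (5000/6561::real)^k)"
  proof -
    have e: "real (2^k) * (2500/6561::real)^k = (5000/6561)^k" for k :: nat
    proof -
      have "(2::real)^k * (2500/6561)^k = (2 * (2500/6561))^k" by (rule power_mult_distrib[symmetric])
      then show ?thesis by simp
    qed
    have "(\<Sum>k\<le>r. \<Sum>i<(2::nat)^k. 30000 * L^2 / l^4 * (2500/6561::real)^k) = (\<Sum>k\<le>r. 30000 * L^2 / l^4 * (real (2^k) * (2500/6561::real)^k))"
      by (simp add: mult_ac)
    then show ?thesis by (simp only: e sum_distrib_left)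
  qed
  also have "\<dots> \<le> 30000 * L^2 / l^4 * 5"
  proof (intro mult_left_mono)
    have "(\<Sum>k\<le>r. (5000/6561::real)^k) = (1 - (5000/6561)^(Suc r)) / (1 - 5000/6561)"
      using sum_gp_strict[of "5000/6561::real" "Suc r"] by (simp add: lessThan_Suc_atMost)
    also have "\<dots> \<le> 5" by (rule gp5) simp
    finally show "(\<Sum>k\<le>r. (5000/6561::real)^k) \<le> 5" .
  qed (use l in auto)
  finally show ?thesis by simp
qed

end

lemma pi_sum_meas:
  assumes "S \<subseteq> K" "finite S"
  shows "(\<lambda>f. \<Sum>l\<in>S. f l) \<in> borel_measurable (PiM K (\<lambda>_. (borel :: real measure)))"
proof (rule borel_measurable_sum)
  fix l assume "l \<in> S"
  then have "l \<in> K" using assms by auto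
  then show "(\<lambda>f. f l) \<in> borel_measurable (PiM K (\<lambda>_. (borel :: real measure)))"
    by (rule measurable_component_singleton)
qed

lemma pi_sum_set:
  assumes "S \<subseteq> K" "finite S"
  shows "{f\<in>space (PiM K (\<lambda>_. (borel :: real measure))). \<bar>(\<Sum>l\<in>S. f l) - d\<bar> \<le> c} \<in> sets (PiM K (\<lambda>_. borel))"
proof -
  note pi_sum_meas[OF assms, measurable]
  show ?thesis by measurable
qed

context bm
begin

lemma grid_indep:
  fixes h :: real and N :: nat and K :: "nat \<Rightarrow> nat set" and J :: "nat set"
    and P :: "nat \<Rightarrow> (nat \<Rightarrow> real) \<Rightarrow> bool"
  assumes h: "0 \<le> h" and J: "finite J" "J \<noteq> {}" and K: "\<And>j. j \<in> J \<Longrightarrow> K j \<subseteq> {..<N}"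
    and disj: "disjoint_family_on K J"
    and Pm: "\<And>j. j \<in> J \<Longrightarrow> {f \<in> space (PiM (K j) (\<lambda>_. borel)). P j f} \<in> sets (PiM (K j) (\<lambda>_. borel))"
  shows "prob (\<Inter>j\<in>J. {\<omega>\<in>space M. P j (\<lambda>l\<in>K j. W (real (Suc l) * h) \<omega> - W (real l * h) \<omega>)})
       = (\<Prod>j\<in>J. prob {\<omega>\<in>space M. P j (\<lambda>l\<in>K j. W (real (Suc l) * h) \<omega> - W (real l * h) \<omega>)})"
proof -
  define ts where "ts = map (\<lambda>i. real i * h) [0..<Suc N]"
  have "sorted ts" unfolding ts_def using h
    by (auto simp: sorted_iff_nth_mono simp del: upt_Suc intro!: mult_right_mono)
  moreover have "\<forall>x\<in>set ts. 0 \<le> x" unfolding ts_def using h by auto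
  ultimately have I0: "indep_vars (\<lambda>_. borel) (\<lambda>i \<omega>. W (ts ! Suc i) \<omega> - W (ts ! i) \<omega>) {..<length ts - 1}"
    by (rule Windep)
  define Y where "Y l \<omega> = W (real (Suc l) * h) \<omega> - W (real l * h) \<omega>" for l \<omega>
  have I1: "indep_vars (\<lambda>_. borel) Y {..<N}"
  proof -
    have "indep_vars (\<lambda>_. borel) (\<lambda>i \<omega>. W (ts ! Suc i) \<omega> - W (ts ! i) \<omega>) {..<length ts - 1}
        \<longleftrightarrow> indep_vars (\<lambda>_. borel) Y {..<N}"
      by (intro indep_vars_cong) (auto simp: ts_def Y_def nth_append simp del: upt_Suc)
    then show ?thesis using I0 by simp
  qed
  have I2: "indep_vars (\<lambda>j. PiM (K j) (\<lambda>_. borel)) (\<lambda>j \<omega>. restrict (\<lambda>i. Y i \<omega>) (K j)) J"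
    by (rule indep_vars_restrict[OF I1 K disj])
  define A where "A j = {f \<in> space (PiM (K j) (\<lambda>_. borel)). P j f}" for j
  have eq: "(\<lambda>\<omega>. restrict (\<lambda>i. Y i \<omega>) (K j)) -` A j \<inter> space M
      = {\<omega>\<in>space M. P j (\<lambda>l\<in>K j. W (real (Suc l) * h) \<omega> - W (real l * h) \<omega>)}" for j
    by (auto simp: A_def Y_def space_PiM)
  have "prob (\<Inter>j\<in>J. (\<lambda>\<omega>. restrict (\<lambda>i. Y i \<omega>) (K j)) -` A j \<inter> space M)
       = (\<Prod>j\<in>J. prob ((\<lambda>\<omega>. restrict (\<lambda>i. Y i \<omega>) (K j)) -` A j \<inter> space M))"
    by (rule indep_varsD[OF I2 J(2) J(1) order_refl]) (use Pm in \<open>auto simp: A_def\<close>)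
  then show ?thesis unfolding eq .
qed

end

context bm
begin

lemma ev_max: "0 \<le> t \<Longrightarrow> 0 \<le> L \<Longrightarrow> {\<omega>\<in>space M. \<exists>i\<le>(2::nat)^r. l < \<bar>W (t + real i * L / 2^r) \<omega> - W t \<omega>\<bar>} \<in> events"
proof -
  assume tl: "0 \<le> t" "0 \<le> L"
  have "{\<omega>\<in>space M. \<exists>i\<le>(2::nat)^r. l < \<bar>W (t + real i * L / 2^r) \<omega> - W t \<omega>\<bar>}
      = (\<Union>i\<in>{..2^r}. {\<omega>\<in>space M. l < \<bar>W (t + real i * L / 2^r) \<omega> - W t \<omega>\<bar>})" by auto
  also have "\<dots> \<in> events" using tl by (intro sets.finite_UN ev_gt) auto
  finally show ?thesis .
qed

lemma telescope:
  "a \<le> b \<Longrightarrow> (\<Sum>l\<in>{a..<b}. W (real (Suc l) * h) \<omega> - W (real l * h) \<omega>) = W (real b * h) \<omega> - W (real a * h) \<omega>"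
  using sum_Suc_diff'[of a b "\<lambda>l. W (real l * h) \<omega>"] by simp

lemma block_lower:
  assumes t: "0 \<le> t" and D: "0 < Dl" and lam: "0 < lam" and e: "0 < e"
  shows "prob {\<omega>\<in>space M. (\<forall>i\<le>2^r. \<bar>W (t + real i * Dl / 2^r) \<omega> - W t \<omega> - 0\<bar> \<le> lam) \<and> \<bar>W (t + Dl) \<omega> - W t \<omega> - d\<bar> \<le> e}
     \<ge> 2 * e * (1 / sqrt (2 * pi * Dl) * exp (- ((abs d + e)^2) / (2 * Dl))) - 150000 * Dl^2 / lam^4"
proof -
  let ?A = "{\<omega>\<in>space M. \<exists>i\<le>(2::nat)^r. lam < \<bar>W (t + real i * Dl / 2^r) \<omega> - W t \<omega>\<bar>}"
  let ?B = "{\<omega>\<in>space M. \<bar>W (t + Dl) \<omega> - W t \<omega> - d\<bar> \<le> e}"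
  let ?S = "{\<omega>\<in>space M. (\<forall>i\<le>2^r. \<bar>W (t + real i * Dl / 2^r) \<omega> - W t \<omega> - 0\<bar> \<le> lam) \<and> \<bar>W (t + Dl) \<omega> - W t \<omega> - d\<bar> \<le> e}"
  have sub: "?B \<subseteq> ?S \<union> ?A"
  proof
    fix \<omega> assume B: "\<omega> \<in> ?B"
    show "\<omega> \<in> ?S \<union> ?A"
    proof (cases "\<exists>i\<le>(2::nat)^r. lam < \<bar>W (t + real i * Dl / 2^r) \<omega> - W t \<omega>\<bar>")
      case True then show ?thesis using B by blast
    next
      case False
      then have "\<forall>i\<le>2^r. \<bar>W (t + real i * Dl / 2^r) \<omega> - W t \<omega> - 0\<bar> \<le> lam" by (simp add: not_less)
      then show ?thesis using B by blast
    qed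
  qed
  have evA: "?A \<in> events" using t D by (intro ev_max) auto
  have evB: "?B \<in> events" using t D by (intro ev_le) auto
  have evS: "?S \<in> events"
  proof -
    have "?S = (\<Inter>i\<in>{..2^r}. {\<omega>\<in>space M. \<bar>W (t + real i * Dl / 2^r) \<omega> - W t \<omega> - 0\<bar> \<le> lam}) \<inter> ?B"
      by blast
    also have "\<dots> \<in> events"
    proof (rule sets.Int[OF sets.finite_INT evB])
      fix i assume "i \<in> {..(2::nat)^r}"
      show "{\<omega>\<in>space M. \<bar>W (t + real i * Dl / 2^r) \<omega> - W t \<omega> - 0\<bar> \<le> lam} \<in> events"
        using t D by (intro ev_le) auto
    qed auto
    finally show ?thesis .
  qed
  have "prob ?B \<le> prob (?S \<union> ?A)" by (rule finite_measure_mono[OF sub sets.Un[OF evS evA]])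
  also have "\<dots> \<le> prob ?S + prob ?A" by (rule measure_Un_le[OF evS evA])
  finally have 1: "prob ?B \<le> prob ?S + prob ?A" .
  have 2: "prob ?A \<le> 150000 * Dl^2 / lam^4" using maxbound[OF t D lam] .
  have 3: "prob ?B \<ge> 2 * e * (1 / sqrt (2 * pi * ((t + Dl) - t)) * exp (- ((abs d + e)^2) / (2 * ((t + Dl) - t))))"
    using t D e by (intro gauss_lower) auto
  show ?thesis using 1 2 3 by simp
qed

end

locale posctx = bm M W for M :: "'a measure" and W +
  fixes \<kappa> s x a \<eta> T1 \<Delta> d e :: real and p :: nat
  assumes kappa: "1/2 < \<kappa>" and s0: "0 \<le> s" and x1: "\<bar>x\<bar> < 1"
    and a_def: "a = (s+1) powr \<kappa>" and eta_def: "\<eta> = (1 - \<bar>x\<bar>) * a / 2"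
    and T1: "1 \<le> T1" and Delta_def: "\<Delta> = T1 / 4^p" and d_def: "d = - (x * a) / 4^p"
    and e_def: "e = \<eta> / (4 * 4^p)"
    and blk: "0 < 2 * e * (1 / sqrt (2 * pi * \<Delta>) * exp (- ((abs d + e)^2) / (2 * \<Delta>))) - 150000 * \<Delta>^2 / (\<eta>/4)^4"
    and tl: "\<And>m. (\<Sum>k\<le>m. 150000 * (2^(k+1) * T1)^2 / ((1/2) * (2^k * T1) powr \<kappa>)^4) \<le> 1/2"
begin

abbreviation "n \<equiv> (4::nat)^p"
definition "h m = \<Delta> / 2^m"
definition "pb = 2 * e * (1 / sqrt (2 * pi * \<Delta>) * exp (- ((abs d + e)^2) / (2 * \<Delta>))) - 150000 * \<Delta>^2 / (\<eta>/4)^4"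
definition "D m j = {\<omega>\<in>space M. (\<forall>i\<le>2^m. \<bar>W (real (j*2^m+i) * h m) \<omega> - W (real (j*2^m) * h m) \<omega> - 0\<bar> \<le> \<eta>/4)
    \<and> \<bar>W (real (j*2^m+2^m) * h m) \<omega> - W (real (j*2^m) * h m) \<omega> - d\<bar> \<le> e}"
definition "Tl m = {\<omega>\<in>space M. \<forall>k\<le>m. \<forall>i\<le>2^(m+k+1).
    \<bar>W (real (n*2^m + i*n) * h m) \<omega> - W (real (n*2^m) * h m) \<omega> - 0\<bar> \<le> (1/2) * (2^k*T1) powr \<kappa>}"
definition "F m = (\<Inter>j<n. D m j) \<inter> Tl m"

lemma a1: "1 \<le> a" unfolding a_def using s0 kappa by (intro ge_one_powr_ge_zero) auto
lemma eta_pos: "0 < \<eta>" unfolding eta_def using a1 x1 by simp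
lemma eta_le: "\<eta> \<le> a / 2" unfolding eta_def using a1 x1 by (simp add: field_simps)
lemma Delta_pos: "0 < \<Delta>" unfolding Delta_def using T1 by simp
lemma h_pos: "0 < h m" unfolding h_def using Delta_pos by simp
lemma e_pos: "0 < e" unfolding e_def using eta_pos by simp
lemma pb_pos: "0 < pb" using blk by (simp add: pb_def)

lemma D_alt: "D m j = {\<omega>\<in>space M. (\<forall>i\<le>2^m. \<bar>W (real j * \<Delta> + real i * \<Delta> / 2^m) \<omega> - W (real j * \<Delta>) \<omega> - 0\<bar> \<le> \<eta>/4)
    \<and> \<bar>W (real j * \<Delta> + \<Delta>) \<omega> - W (real j * \<Delta>) \<omega> - d\<bar> \<le> e}"
proof -
  have p1: "real (j*2^m+i) * h m = real j * \<Delta> + real i * \<Delta> / 2^m" for i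
    by (simp add: h_def field_simps)
  have p2: "real (j*2^m) * h m = real j * \<Delta>"
    by (simp add: h_def field_simps)
  have p3: "real (j*2^m+2^m) * h m = real j * \<Delta> + \<Delta>"
    by (simp add: h_def field_simps)
  show ?thesis unfolding D_def p3 unfolding p1 p2 ..
qed

lemma D_ev: "D m j \<in> events"
proof -
  have "D m j = (\<Inter>i\<in>{..(2::nat)^m}. {\<omega>\<in>space M. \<bar>W (real (j*2^m+i) * h m) \<omega> - W (real (j*2^m) * h m) \<omega> - 0\<bar> \<le> \<eta>/4})
      \<inter> {\<omega>\<in>space M. \<bar>W (real (j*2^m+2^m) * h m) \<omega> - W (real (j*2^m) * h m) \<omega> - d\<bar> \<le> e}"
    unfolding D_def by blast
  also have "\<dots> \<in> events"
  proof (rule sets.Int[OF sets.finite_INT])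
    fix i assume "i \<in> {..(2::nat)^m}"
    show "{\<omega>\<in>space M. \<bar>W (real (j*2^m+i) * h m) \<omega> - W (real (j*2^m) * h m) \<omega> - 0\<bar> \<le> \<eta>/4} \<in> events"
      using h_pos[of m] by (intro ev_le) auto
  next
    show "{\<omega>\<in>space M. \<bar>W (real (j*2^m+2^m) * h m) \<omega> - W (real (j*2^m) * h m) \<omega> - d\<bar> \<le> e} \<in> events"
      using h_pos[of m] by (intro ev_le) auto
  qed auto
  finally show ?thesis .
qed

lemma Tl_ev: "Tl m \<in> events"
proof -
  have "Tl m = (\<Inter>k\<in>{..m}. \<Inter>i\<in>{..(2::nat)^(m+k+1)}. {\<omega>\<in>space M.
    \<bar>W (real (n*2^m + i*n) * h m) \<omega> - W (real (n*2^m) * h m) \<omega> - 0\<bar> \<le> (1/2) * (2^k*T1) powr \<kappa>})"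
    unfolding Tl_def by blast
  also have "\<dots> \<in> events"
  proof (rule sets.finite_INT)
    fix k assume "k \<in> {..m}"
    show "(\<Inter>i\<in>{..(2::nat)^(m+k+1)}. {\<omega>\<in>space M.
       \<bar>W (real (n*2^m + i*n) * h m) \<omega> - W (real (n*2^m) * h m) \<omega> - 0\<bar> \<le> (1/2) * (2^k*T1) powr \<kappa>}) \<in> events"
    proof (rule sets.finite_INT)
      fix i assume "i \<in> {..(2::nat)^(m+k+1)}"
      show "{\<omega>\<in>space M. \<bar>W (real (n*2^m + i*n) * h m) \<omega> - W (real (n*2^m) * h m) \<omega> - 0\<bar> \<le> (1/2) * (2^k*T1) powr \<kappa>} \<in> events"
        using h_pos[of m] by (intro ev_le) auto
    qed auto
  qed auto
  finally show ?thesis .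
qed

lemma F_ev: "F m \<in> events"
proof -
  have "{..<n} \<noteq> {}" by (simp add: lessThan_empty_iff)
  then show ?thesis unfolding F_def using D_ev Tl_ev by (intro sets.Int sets.finite_INT) auto
qed

lemma D_prob: "pb \<le> prob (D m j)"
proof -
  have "pb \<le> prob {\<omega>\<in>space M. (\<forall>i\<le>2^m. \<bar>W (real j * \<Delta> + real i * \<Delta> / 2^m) \<omega> - W (real j * \<Delta>) \<omega> - 0\<bar> \<le> \<eta>/4)
    \<and> \<bar>W (real j * \<Delta> + \<Delta>) \<omega> - W (real j * \<Delta>) \<omega> - d\<bar> \<le> e}"
    unfolding pb_def using Delta_pos eta_pos e_pos by (intro block_lower) auto
  then show ?thesis unfolding D_alt .
qed

lemma Tl_prob: "1/2 \<le> prob (Tl m)"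
proof -
  define B where "B k = {\<omega>\<in>space M. \<exists>i\<le>(2::nat)^(m+k+1). (1/2)*(2^k*T1) powr \<kappa> < \<bar>W (T1 + real i * (2^(k+1)*T1) / 2^(m+k+1)) \<omega> - W T1 \<omega>\<bar>}" for k
  have pts: "real (n*2^m + i*n) * h m = T1 + real i * (2^(k+1)*T1) / 2^(m+k+1)" for i k
    unfolding h_def unfolding Delta_def by (simp add: power_add field_simps)
  have pt0: "real (n*2^m) * h m = T1"
    unfolding h_def unfolding Delta_def by (simp add: power_add field_simps)
  have sub: "space M - Tl m \<subseteq> (\<Union>k\<in>{..m}. B k)"
  proof
    fix \<omega> assume \<omega>: "\<omega> \<in> space M - Tl m"
    then obtain k i where ki: "k \<le> m" "i \<le> (2::nat)^(m+k+1)"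
      "\<not> \<bar>W (real (n*2^m + i*n) * h m) \<omega> - W (real (n*2^m) * h m) \<omega> - 0\<bar> \<le> (1/2) * (2^k*T1) powr \<kappa>"
      unfolding Tl_def by blast
    then have "(1/2)*(2^k*T1) powr \<kappa> < \<bar>W (T1 + real i * (2^(k+1)*T1) / 2^(m+k+1)) \<omega> - W T1 \<omega>\<bar>"
      unfolding pts[of i k] pt0 by simp
    then have "\<omega> \<in> B k" unfolding B_def using \<omega> ki(2) by blast
    then show "\<omega> \<in> (\<Union>k\<in>{..m}. B k)" using ki(1) by blast
  qed
  have Bev: "B k \<in> events" for k
    unfolding B_def using T1 by (intro ev_max) auto
  have Bp: "prob (B k) \<le> 150000 * (2^(k+1) * T1)^2 / ((1/2) * (2^k * T1) powr \<kappa>)^4" for k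
    unfolding B_def using T1 by (intro maxbound) auto
  have "prob (space M - Tl m) \<le> prob (\<Union>k\<in>{..m}. B k)"
    using sub Bev by (intro finite_measure_mono sets.finite_UN) auto
  also have "\<dots> \<le> (\<Sum>k\<le>m. prob (B k))"
    using Bev by (intro finite_measure_subadditive_finite) auto
  also have "\<dots> \<le> (\<Sum>k\<le>m. 150000 * (2^(k+1) * T1)^2 / ((1/2) * (2^k * T1) powr \<kappa>)^4)"
    by (intro sum_mono Bp)
  also have "\<dots> \<le> 1/2" by (rule tl)
  finally have "prob (space M - Tl m) \<le> 1/2" .
  then show ?thesis using prob_compl[OF Tl_ev[of m]] by simp
qed

lemma D_mono: "D (Suc m) j \<subseteq> D m j"
proof
  fix \<omega> assume \<omega>: "\<omega> \<in> D (Suc m) j"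
  have q1: "real (j*2^Suc m + 2*i) * h (Suc m) = real (j*2^m+i) * h m" for i
    by (simp add: h_def field_simps)
  have q2: "real (j*2^Suc m) * h (Suc m) = real (j*2^m) * h m"
    by (simp add: h_def field_simps)
  have q3: "real (j*2^Suc m + 2^Suc m) * h (Suc m) = real (j*2^m+2^m) * h m"
    by (simp add: h_def field_simps)
  have A: "\<forall>i\<le>2^Suc m. \<bar>W (real (j*2^Suc m+i) * h (Suc m)) \<omega> - W (real (j*2^Suc m) * h (Suc m)) \<omega> - 0\<bar> \<le> \<eta>/4"
    and B: "\<bar>W (real (j*2^Suc m+2^Suc m) * h (Suc m)) \<omega> - W (real (j*2^Suc m) * h (Suc m)) \<omega> - d\<bar> \<le> e"
    and S: "\<omega> \<in> space M"
    using \<omega> unfolding D_def by blast+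
  have "\<forall>i\<le>2^m. \<bar>W (real (j*2^m+i) * h m) \<omega> - W (real (j*2^m) * h m) \<omega> - 0\<bar> \<le> \<eta>/4"
  proof (intro allI impI)
    fix i :: nat assume "i \<le> 2^m"
    then have "2*i \<le> 2^Suc m" by simp
    then show "\<bar>W (real (j*2^m+i) * h m) \<omega> - W (real (j*2^m) * h m) \<omega> - 0\<bar> \<le> \<eta>/4"
      using A unfolding q1[symmetric] q2[symmetric] by blast
  qed
  moreover have "\<bar>W (real (j*2^m+2^m) * h m) \<omega> - W (real (j*2^m) * h m) \<omega> - d\<bar> \<le> e"
    using B unfolding q2 q3 .
  ultimately show "\<omega> \<in> D m j" unfolding D_def using S by blast
qed

lemma Tl_mono: "Tl (Suc m) \<subseteq> Tl m"
proof
  fix \<omega> assume \<omega>: "\<omega> \<in> Tl (Suc m)"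
  have q1: "real (n*2^Suc m + (2*i)*n) * h (Suc m) = real (n*2^m+i*n) * h m" for i
    by (simp add: h_def field_simps)
  have q2: "real (n*2^Suc m) * h (Suc m) = real (n*2^m) * h m"
    by (simp add: h_def field_simps)
  have A: "\<forall>k\<le>Suc m. \<forall>i\<le>2^(Suc m+k+1). \<bar>W (real (n*2^Suc m + i*n) * h (Suc m)) \<omega> - W (real (n*2^Suc m) * h (Suc m)) \<omega> - 0\<bar> \<le> (1/2) * (2^k*T1) powr \<kappa>"
    and S: "\<omega> \<in> space M"
    using \<omega> unfolding Tl_def by blast+
  have "\<forall>k\<le>m. \<forall>i\<le>2^(m+k+1). \<bar>W (real (n*2^m + i*n) * h m) \<omega> - W (real (n*2^m) * h m) \<omega> - 0\<bar> \<le> (1/2) * (2^k*T1) powr \<kappa>"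
  proof (intro allI impI)
    fix k i :: nat assume k: "k \<le> m" and i: "i \<le> 2^(m+k+1)"
    then have "2*i \<le> 2^(Suc m+k+1)" "k \<le> Suc m" by simp_all
    then show "\<bar>W (real (n*2^m + i*n) * h m) \<omega> - W (real (n*2^m) * h m) \<omega> - 0\<bar> \<le> (1/2) * (2^k*T1) powr \<kappa>"
      using A unfolding q1[symmetric] q2[symmetric] by blast
  qed
  then show "\<omega> \<in> Tl m" unfolding Tl_def using S by blast
qed

lemma F_mono: "F (Suc m) \<subseteq> F m"
  unfolding F_def using D_mono Tl_mono by blast

end

context posctx begin

definition "KK m j = (if j < n then {j*2^m..<j*2^m+2^m} else {n*2^m..<n*2^m + 2^(2*m+1)*n})"
definition "PP m j f = (if j < n then (\<forall>i\<le>2^m. \<bar>(\<Sum>l\<in>{j*2^m..<j*2^m+i}. f l) - 0\<bar> \<le> \<eta>/4) \<and> \<bar>(\<Sum>l\<in>{j*2^m..<j*2^m+2^m}. f l) - d\<bar> \<le> e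
   else (\<forall>k\<le>m. \<forall>i\<le>2^(m+k+1). \<bar>(\<Sum>l\<in>{n*2^m..<n*2^m+i*n}. f l) - 0\<bar> \<le> (1/2) * (2^k*T1) powr \<kappa>))"

lemma restr_sum:
  fixes a1 b1 :: nat and K :: "nat set" and hh :: real
  assumes "{a1..<b1} \<subseteq> K" "a1 \<le> b1"
  shows "(\<Sum>l\<in>{a1..<b1}. (\<lambda>l\<in>K. W (real (Suc l) * hh) \<omega> - W (real l * hh) \<omega>) l) = W (real b1 * hh) \<omega> - W (real a1 * hh) \<omega>"
proof -
  have "(\<Sum>l\<in>{a1..<b1}. (\<lambda>l\<in>K. W (real (Suc l) * hh) \<omega> - W (real l * hh) \<omega>) l)
      = (\<Sum>l\<in>{a1..<b1}. W (real (Suc l) * hh) \<omega> - W (real l * hh) \<omega>)"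
    using assms(1) by (intro sum.cong) auto
  also have "\<dots> = W (real b1 * hh) \<omega> - W (real a1 * hh) \<omega>" using assms(2) by (rule telescope)
  finally show ?thesis .
qed

lemma Ev_eq: "j \<le> n \<Longrightarrow> {\<omega>\<in>space M. PP m j (\<lambda>l\<in>KK m j. W (real (Suc l) * h m) \<omega> - W (real l * h m) \<omega>)}
   = (if j < n then D m j else Tl m)"
proof -
  assume jn: "j \<le> n"
  show ?thesis
  proof (cases "j < n")
    case True
    have r1: "(\<Sum>l\<in>{j*2^m..<j*2^m+i}. (\<lambda>l\<in>KK m j. W (real (Suc l) * h m) \<omega> - W (real l * h m) \<omega>) l)
        = W (real (j*2^m+i) * h m) \<omega> - W (real (j*2^m) * h m) \<omega>" if "i \<le> 2^m" for i \<omega>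
      using True that by (intro restr_sum) (auto simp: KK_def)
    have r2: "(\<Sum>l\<in>{j*2^m..<j*2^m+2^m}. (\<lambda>l\<in>KK m j. W (real (Suc l) * h m) \<omega> - W (real l * h m) \<omega>) l)
        = W (real (j*2^m+2^m) * h m) \<omega> - W (real (j*2^m) * h m) \<omega>" for \<omega>
      using True by (intro restr_sum) (auto simp: KK_def)
    show ?thesis
    proof (rule set_eqI)
      fix \<omega>
      have "PP m j (\<lambda>l\<in>KK m j. W (real (Suc l) * h m) \<omega> - W (real l * h m) \<omega>) \<longleftrightarrow>
         (\<forall>i\<le>2^m. \<bar>W (real (j*2^m+i) * h m) \<omega> - W (real (j*2^m) * h m) \<omega> - 0\<bar> \<le> \<eta>/4)
          \<and> \<bar>W (real (j*2^m+2^m) * h m) \<omega> - W (real (j*2^m) * h m) \<omega> - d\<bar> \<le> e"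
        unfolding PP_def using True r1 r2 by simp
      then show "\<omega> \<in> {\<omega>\<in>space M. PP m j (\<lambda>l\<in>KK m j. W (real (Suc l) * h m) \<omega> - W (real l * h m) \<omega>)}
           \<longleftrightarrow> \<omega> \<in> (if j < n then D m j else Tl m)"
        using True unfolding D_def by simp
    qed
  next
    case False
    then have jn': "j = n" using jn by simp
    have r1: "(\<Sum>l\<in>{n*2^m..<n*2^m+i*n}. (\<lambda>l\<in>KK m j. W (real (Suc l) * h m) \<omega> - W (real l * h m) \<omega>) l)
        = W (real (n*2^m+i*n) * h m) \<omega> - W (real (n*2^m) * h m) \<omega>" if "i \<le> 2^(m+k+1)" "k \<le> m" for i k \<omega>
    proof (intro restr_sum)
      have "2^(m+k+1) \<le> (2::nat)^(2*m+1)" using that(2) by (intro power_increasing) auto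
      then have "i \<le> 2^(2*m+1)" using that(1) by (rule order_trans[rotated])
      then have "i*n \<le> 2^(2*m+1)*n" by (rule mult_le_mono1)
      then show "{n*2^m..<n*2^m+i*n} \<subseteq> KK m j" using jn' by (auto simp: KK_def)
    qed simp
    show ?thesis
    proof (rule set_eqI)
      fix \<omega>
      have "PP m j (\<lambda>l\<in>KK m j. W (real (Suc l) * h m) \<omega> - W (real l * h m) \<omega>) \<longleftrightarrow>
         (\<forall>k\<le>m. \<forall>i\<le>2^(m+k+1). \<bar>W (real (n*2^m + i*n) * h m) \<omega> - W (real (n*2^m) * h m) \<omega> - 0\<bar> \<le> (1/2) * (2^k*T1) powr \<kappa>)"
        unfolding PP_def using jn' r1 by simp
      then show "\<omega> \<in> {\<omega>\<in>space M. PP m j (\<lambda>l\<in>KK m j. W (real (Suc l) * h m) \<omega> - W (real l * h m) \<omega>)}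
           \<longleftrightarrow> \<omega> \<in> (if j < n then D m j else Tl m)"
        using jn' unfolding Tl_def by simp
    qed
  qed
qed

lemma KK_bounds: "y \<in> KK m j \<Longrightarrow> j \<le> n \<Longrightarrow> j*2^m \<le> y \<and> (j < n \<longrightarrow> y < Suc j*2^m) \<and> y < n*2^m + 2^(2*m+1)*n"
proof -
  assume x: "y \<in> KK m j" and j: "j \<le> n"
  show ?thesis
  proof (cases "j < n")
    case True
    then have "Suc j * 2^m \<le> n * 2^m" by (intro mult_le_mono1) simp
    then show ?thesis using x True by (auto simp: KK_def)
  next
    case False
    then show ?thesis using x j by (auto simp: KK_def)
  qed
qed

lemma KK_disj: "disjoint_family_on (KK m) {..n}"
proof (unfold disjoint_family_on_def, intro ballI impI)
  have *: "KK m i \<inter> KK m j = {}" if ij: "i < j" "j \<le> n" for i j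
  proof -
    have "Suc i * 2^m \<le> j * 2^m" using ij by (intro mult_le_mono1) simp
    then show ?thesis using KK_bounds[of _ m i] KK_bounds[of _ m j] ij by fastforce
  qed
  fix i j assume "i \<in> {..n}" "j \<in> {..n}" "i \<noteq> j"
  then show "KK m i \<inter> KK m j = {}"
    using *[of i j] *[of j i] by (cases "i < j") auto
qed

lemma PP_meas: "j \<le> n \<Longrightarrow> {f \<in> space (PiM (KK m j) (\<lambda>_. borel)). PP m j f} \<in> sets (PiM (KK m j) (\<lambda>_. borel))"
proof -
  assume jn: "j \<le> n"
  show ?thesis
  proof (cases "j < n")
    case True
    have "{f \<in> space (PiM (KK m j) (\<lambda>_. borel)). PP m j f} =
       (\<Inter>i\<in>{..(2::nat)^m}. {f \<in> space (PiM (KK m j) (\<lambda>_. borel)). \<bar>(\<Sum>l\<in>{j*2^m..<j*2^m+i}. f l) - 0\<bar> \<le> \<eta>/4})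
       \<inter> {f \<in> space (PiM (KK m j) (\<lambda>_. borel)). \<bar>(\<Sum>l\<in>{j*2^m..<j*2^m+2^m}. f l) - d\<bar> \<le> e}"
    proof -
      have pp: "PP m j f \<longleftrightarrow> (\<forall>i\<le>2^m. \<bar>(\<Sum>l\<in>{j*2^m..<j*2^m+i}. f l) - 0\<bar> \<le> \<eta>/4) \<and> \<bar>(\<Sum>l\<in>{j*2^m..<j*2^m+2^m}. f l) - d\<bar> \<le> e" for f
        unfolding PP_def using True by simp
      show ?thesis unfolding pp by blast
    qed
    also have "\<dots> \<in> sets (PiM (KK m j) (\<lambda>_. borel))"
    proof (rule sets.Int[OF sets.finite_INT])
      fix i :: nat assume "i \<in> {..2^m}"
      then show "{f \<in> space (PiM (KK m j) (\<lambda>_. borel)). \<bar>(\<Sum>l\<in>{j*2^m..<j*2^m+i}. f l) - 0\<bar> \<le> \<eta>/4} \<in> sets (PiM (KK m j) (\<lambda>_. borel))"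
        using True by (intro pi_sum_set) (auto simp: KK_def)
    next
      show "{f \<in> space (PiM (KK m j) (\<lambda>_. borel)). \<bar>(\<Sum>l\<in>{j*2^m..<j*2^m+2^m}. f l) - d\<bar> \<le> e} \<in> sets (PiM (KK m j) (\<lambda>_. borel))"
        using True by (intro pi_sum_set) (auto simp: KK_def)
    qed auto
    finally show ?thesis .
  next
    case False
    then have jn': "j = n" using jn by simp
    have "{f \<in> space (PiM (KK m j) (\<lambda>_. borel)). PP m j f} =
       (\<Inter>k\<in>{..m}. \<Inter>i\<in>{..(2::nat)^(m+k+1)}. {f \<in> space (PiM (KK m j) (\<lambda>_. borel)). \<bar>(\<Sum>l\<in>{n*2^m..<n*2^m+i*n}. f l) - 0\<bar> \<le> (1/2) * (2^k*T1) powr \<kappa>})"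
      unfolding PP_def using jn' by auto
    also have "\<dots> \<in> sets (PiM (KK m j) (\<lambda>_. borel))"
    proof (intro sets.finite_INT)
      fix k i :: nat assume k: "k \<in> {..m}" and i: "i \<in> {..2^(m+k+1)}"
      have "2^(m+k+1) \<le> (2::nat)^(2*m+1)" using k by (intro power_increasing) auto
      moreover have "i \<le> 2^(m+k+1)" using i by simp
      ultimately have "i \<le> 2^(2*m+1)" by (rule order_trans[rotated])
      then have "i*n \<le> 2^(2*m+1)*n" by (rule mult_le_mono1)
      then show "{f \<in> space (PiM (KK m j) (\<lambda>_. borel)). \<bar>(\<Sum>l\<in>{n*2^m..<n*2^m+i*n}. f l) - 0\<bar> \<le> (1/2) * (2^k*T1) powr \<kappa>} \<in> sets (PiM (KK m j) (\<lambda>_. borel))"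
        using jn' by (intro pi_sum_set) (auto simp: KK_def)
    qed auto
    finally show ?thesis .
  qed
qed

lemma F_prob: "prob (F m) = (\<Prod>j<n. prob (D m j)) * prob (Tl m)"
proof -
  have gi: "prob (\<Inter>j\<in>{..n}. {\<omega>\<in>space M. PP m j (\<lambda>l\<in>KK m j. W (real (Suc l) * h m) \<omega> - W (real l * h m) \<omega>)})
       = (\<Prod>j\<in>{..n}. prob {\<omega>\<in>space M. PP m j (\<lambda>l\<in>KK m j. W (real (Suc l) * h m) \<omega> - W (real l * h m) \<omega>)})"
  proof (rule grid_indep)
    show "0 \<le> h m" using h_pos[of m] by simp
    show "KK m j \<subseteq> {..<n*2^m + 2^(2*m+1)*n}" if "j \<in> {..n}" for j
      using KK_bounds[of _ m j] that by auto
    show "disjoint_family_on (KK m) {..n}" by (rule KK_disj)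
    show "{f \<in> space (PiM (KK m j) (\<lambda>_. borel)). PP m j f} \<in> sets (PiM (KK m j) (\<lambda>_. borel))" if "j \<in> {..n}" for j
      using that by (intro PP_meas) auto
  qed auto
  have e1: "(\<Inter>j\<in>{..n}. {\<omega>\<in>space M. PP m j (\<lambda>l\<in>KK m j. W (real (Suc l) * h m) \<omega> - W (real l * h m) \<omega>)}) = F m"
  proof -
    have "(\<Inter>j\<in>{..n}. {\<omega>\<in>space M. PP m j (\<lambda>l\<in>KK m j. W (real (Suc l) * h m) \<omega> - W (real l * h m) \<omega>)})
        = (\<Inter>j\<in>{..n}. if j < n then D m j else Tl m)"
      by (intro INF_cong refl Ev_eq) auto
    also have "\<dots> = F m"
    proof -
      have "{..n} = insert n {..<n}" by auto
      then show ?thesis unfolding F_def by auto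
    qed
    finally show ?thesis .
  qed
  have e2: "(\<Prod>j\<in>{..n}. prob {\<omega>\<in>space M. PP m j (\<lambda>l\<in>KK m j. W (real (Suc l) * h m) \<omega> - W (real l * h m) \<omega>)})
      = (\<Prod>j<n. prob (D m j)) * prob (Tl m)"
  proof -
    have "(\<Prod>j\<in>{..n}. prob {\<omega>\<in>space M. PP m j (\<lambda>l\<in>KK m j. W (real (Suc l) * h m) \<omega> - W (real l * h m) \<omega>)})
        = (\<Prod>j\<in>{..n}. prob (if j < n then D m j else Tl m))"
      by (intro prod.cong refl arg_cong[where f=prob] Ev_eq) auto
    also have "\<dots> = (\<Prod>j<Suc n. prob (if j < n then D m j else Tl m))"
      by (simp add: lessThan_Suc_atMost)
    also have "\<dots> = (\<Prod>j<n. prob (D m j)) * prob (Tl m)"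
      by (simp add: prod.lessThan_Suc)
    finally show ?thesis .
  qed
  show ?thesis using gi unfolding e1 e2 .
qed

end

context posctx begin

lemma F_lim: "0 < prob (\<Inter>m. F m)"
proof -
  have dec: "decseq F" using F_mono by (intro decseq_SucI)
  have lim: "(\<lambda>m. prob (F m)) \<longlonglongrightarrow> prob (\<Inter>m. F m)"
    using F_ev dec by (intro finite_Lim_measure_decseq) auto
  have lb: "pb^n * (1/2) \<le> prob (F m)" for m
  proof -
    have "pb^n = (\<Prod>j<n. pb)" by simp
    also have "\<dots> \<le> (\<Prod>j<n. prob (D m j))"
      using pb_pos D_prob by (intro prod_mono) auto
    finally have 1: "pb^n \<le> (\<Prod>j<n. prob (D m j))" .
    have "pb^n * (1/2) \<le> (\<Prod>j<n. prob (D m j)) * prob (Tl m)"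
      using 1 Tl_prob[of m] pb_pos by (intro mult_mono prod_nonneg) auto
    then show ?thesis unfolding F_prob .
  qed
  have "pb^n * (1/2) \<le> prob (\<Inter>m. F m)"
    using lim lb by (intro LIMSEQ_le_const) auto
  moreover have "0 < pb^n * (1/2)" using pb_pos by simp
  ultimately show ?thesis by linarith
qed

lemma wj:
  assumes \<omega>: "\<omega> \<in> space M" and D0: "\<And>j. j < n \<Longrightarrow> \<omega> \<in> D 0 j"
  shows "j \<le> n \<Longrightarrow> \<bar>W (real j * \<Delta>) \<omega> + x * a * real j / real n\<bar> \<le> real j * e"
proof (induction j)
  case 0
  then show ?case using W0[OF \<omega>] by simp
next
  case (Suc j)
  then have jn: "j < n" by simp
  have IH: "\<bar>W (real j * \<Delta>) \<omega> + x * a * real j / real n\<bar> \<le> real j * e" using Suc jn by simp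
  have step: "\<bar>W (real j * \<Delta> + \<Delta>) \<omega> - W (real j * \<Delta>) \<omega> - d\<bar> \<le> e"
    using D0[OF jn] unfolding D_alt by simp
  have pt: "real (Suc j) * \<Delta> = real j * \<Delta> + \<Delta>" by (simp add: field_simps)
  have dd: "d = - (x * a / real n)" unfolding d_def by simp
  define A where "A = W (real j * \<Delta> + \<Delta>) \<omega>"
  define B where "B = W (real j * \<Delta>) \<omega>"
  define c where "c = x * a / real n"
  have "W (real (Suc j) * \<Delta>) \<omega> + x * a * real (Suc j) / real n = (A - B - d) + (B + x * a * real j / real n)"
    unfolding pt A_def B_def dd by (simp add: field_simps)
  also have "\<bar>\<dots>\<bar> \<le> \<bar>A - B - d\<bar> + \<bar>B + x * a * real j / real n\<bar>" by (rule abs_triangle_ineq)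
  also have "\<dots> \<le> e + real j * e" using step IH unfolding A_def B_def by (intro add_mono)
  also have "\<dots> = real (Suc j) * e" by (simp add: field_simps)
  finally show ?case .
qed

lemma early:
  assumes \<omega>: "\<omega> \<in> (\<Inter>m. F m)" and u: "u \<in> {0..T1}"
  shows "\<bar>x * a + W u \<omega>\<bar> \<le> \<bar>x\<bar> * a + \<eta>/2"
proof -
  have sp: "\<omega> \<in> space M" using \<omega> by (auto simp: F_def Tl_def)
  have Dall: "\<And>m j. j < n \<Longrightarrow> \<omega> \<in> D m j" using \<omega> by (auto simp: F_def)
  have ne: "real n * e = \<eta>/4" unfolding e_def by simp
  have a0: "0 \<le> a" using a1 by simp
  have bj: "\<bar>x * a + W (real j * \<Delta>) \<omega>\<bar> \<le> \<bar>x\<bar> * a + \<eta>/4" if jn: "j \<le> n" for j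
  proof -
    have w: "\<bar>W (real j * \<Delta>) \<omega> + x * a * real j / real n\<bar> \<le> real j * e"
      using wj[OF sp Dall jn] .
    have jn': "real j / real n \<le> 1" "0 \<le> 1 - real j / real n" using jn by (auto simp: field_simps)
    have "x * a + W (real j * \<Delta>) \<omega> = (W (real j * \<Delta>) \<omega> + x * a * real j / real n) + x * a * (1 - real j / real n)"
      by (simp add: field_simps)
    also have "\<bar>\<dots>\<bar> \<le> \<bar>W (real j * \<Delta>) \<omega> + x * a * real j / real n\<bar> + \<bar>x * a * (1 - real j / real n)\<bar>"
      by (rule abs_triangle_ineq)
    also have "\<bar>x * a * (1 - real j / real n)\<bar> = \<bar>x\<bar> * a * (1 - real j / real n)"
      using a0 jn' by (simp add: abs_mult)
    also have "\<bar>x\<bar> * a * (1 - real j / real n) \<le> \<bar>x\<bar> * a"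
      using a0 jn' by (simp add: mult_left_le)
    also have "real j * e \<le> real n * e" using jn e_pos by (intro mult_right_mono) auto
    then have "\<bar>W (real j * \<Delta>) \<omega> + x * a * real j / real n\<bar> \<le> \<eta>/4" using w ne by linarith
    finally show ?thesis by linarith
  qed
  define g where "g v = \<bar>x * a + W v \<omega>\<bar> - (\<bar>x\<bar> * a + \<eta>/2)" for v
  have cont: "continuous_on {0..T1} g"
  proof -
    have "continuous_on {0..T1} (\<lambda>v. W v \<omega>)"
      using Wcont[OF sp] by (rule continuous_on_subset) auto
    then show ?thesis unfolding g_def by (intro continuous_intros)
  qed
  have grid: "g (0 + real i * (T1 - 0) / 2^M) \<le> 0" if M: "2*p \<le> M" and i: "i \<le> 2^M" for M i
  proof -
    define m where "m = M - 2*p"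
    have Mm: "M = 2*p + m" using M by (simp add: m_def)
    have pw: "(2::real)^M = 4^p * 2^m" unfolding Mm by (simp add: power_add power_mult)
    have pwn: "(2::nat)^M = n * 2^m" unfolding Mm by (simp add: power_add power_mult)
    define j where "j = i div 2^m"
    define i' where "i' = i mod 2^m"
    have ij: "i = j * 2^m + i'" using div_mult_mod_eq[of i "2^m"] by (simp add: j_def i'_def)
    have i'l: "i' < 2^m" by (simp add: i'_def)
    have pt: "0 + real i * (T1 - 0) / 2^M = real j * \<Delta> + real i' * \<Delta> / 2^m"
      unfolding Delta_def pw ij by (simp add: field_simps)
    show ?thesis
    proof (cases "j < n")
      case True
      have "\<bar>W (real j * \<Delta> + real i' * \<Delta> / 2^m) \<omega> - W (real j * \<Delta>) \<omega> - 0\<bar> \<le> \<eta>/4"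
        using Dall[OF True, of m] i'l unfolding D_alt by auto
      moreover have "\<bar>x * a + W (real j * \<Delta>) \<omega>\<bar> \<le> \<bar>x\<bar> * a + \<eta>/4" using bj True by simp
      ultimately show ?thesis unfolding g_def pt by linarith
    next
      case False
      have iM: "i \<le> n * 2^m" using i pwn by simp
      have "j * 2^m \<le> n * 2^m" using ij iM by linarith
      then have "j \<le> n" by simp
      then have jn: "j = n" using False by simp
      then have "i' = 0" using ij iM by simp
      then have pn: "0 + real i * (T1 - 0) / 2^M = real n * \<Delta>" unfolding pt jn by simp
      show ?thesis unfolding g_def pn using bj[of n] eta_pos by linarith
    qed
  qed
  have "g u \<le> 0" using dyadic_closed[of 0 T1 g "2*p" u] T1 cont grid u by auto
  then show ?thesis unfolding g_def by simp
qed

lemma atT1: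
  assumes \<omega>: "\<omega> \<in> (\<Inter>m. F m)"
  shows "\<bar>x * a + W T1 \<omega>\<bar> \<le> \<eta>/4"
proof -
  have sp: "\<omega> \<in> space M" using \<omega> by (auto simp: F_def Tl_def)
  have Dall: "\<And>m j. j < n \<Longrightarrow> \<omega> \<in> D m j" using \<omega> by (auto simp: F_def)
  have D0: "\<And>j. j < n \<Longrightarrow> \<omega> \<in> D 0 j" using Dall by blast
  have 1: "\<bar>W (real n * \<Delta>) \<omega> + x * a * real n / real n\<bar> \<le> real n * e"
    by (rule wj[OF sp D0 order_refl])
  have 2: "real n * \<Delta> = T1" unfolding Delta_def by simp
  have 3: "real n * e = \<eta>/4" unfolding e_def by simp
  have 4: "x * a * real n / real n = x * a" by simp
  show ?thesis using 1 unfolding 2 3 4 by (simp add: add.commute)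
qed

lemma tailb:
  assumes \<omega>: "\<omega> \<in> (\<Inter>m. F m)" and u: "u \<in> {T1..T1 + 2^(k+1)*T1}"
  shows "\<bar>W u \<omega> - W T1 \<omega>\<bar> \<le> (1/2) * (2^k*T1) powr \<kappa>"
proof -
  have sp: "\<omega> \<in> space M" using \<omega> by (auto simp: F_def Tl_def)
  have Tall: "\<And>m. \<omega> \<in> Tl m" using \<omega> by (auto simp: F_def)
  define g where "g v = \<bar>W v \<omega> - W T1 \<omega>\<bar> - (1/2) * (2^k*T1) powr \<kappa>" for v
  have cont: "continuous_on {T1..T1 + 2^(k+1)*T1} g"
  proof -
    have "continuous_on {T1..T1 + 2^(k+1)*T1} (\<lambda>v. W v \<omega>)"
      using Wcont[OF sp] by (rule continuous_on_subset) (use T1 in auto)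
    then show ?thesis unfolding g_def by (intro continuous_intros)
  qed
  have grid: "g (T1 + real i * ((T1 + 2^(k+1)*T1) - T1) / 2^r) \<le> 0" if r: "2*k+1 \<le> r" and i: "i \<le> 2^r" for r i
  proof -
    define m where "m = r - k - 1"
    have rm: "r = m + k + 1" using r by (simp add: m_def)
    have km: "k \<le> m" using r by (simp add: m_def)
    have p1: "real (n*2^m + i*n) * h m = T1 + real i * ((T1 + 2^(k+1)*T1) - T1) / 2^r"
      unfolding h_def unfolding Delta_def rm by (simp add: power_add field_simps)
    have p0: "real (n*2^m) * h m = T1"
      unfolding h_def unfolding Delta_def by (simp add: power_add field_simps)
    have "\<bar>W (real (n*2^m + i*n) * h m) \<omega> - W (real (n*2^m) * h m) \<omega> - 0\<bar> \<le> (1/2) * (2^k*T1) powr \<kappa>"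
      using Tall[of m] km i unfolding Tl_def rm by blast
    then show ?thesis unfolding g_def p1[symmetric] p0 by simp
  qed
  have "g u \<le> 0" using dyadic_closed[of T1 "T1 + 2^(k+1)*T1" g "2*k+1" u] T1 cont grid u by auto
  then show ?thesis unfolding g_def by simp
qed

lemma good:
  assumes \<omega>: "\<omega> \<in> (\<Inter>m. F m)" and u: "0 \<le> u"
  shows "\<bar>x * a + W u \<omega>\<bar> < (u + s + 1) powr \<kappa>"
proof -
  have ab: "a \<le> (u + s + 1) powr \<kappa>" unfolding a_def using u s0 kappa by (intro powr_mono2) auto
  show ?thesis
  proof (cases "u \<le> T1")
    case True
    have "\<bar>x * a + W u \<omega>\<bar> \<le> \<bar>x\<bar> * a + \<eta>/2" using early[OF \<omega>] True u by auto
    moreover have "\<bar>x\<bar> * a + \<eta>/2 < a" unfolding eta_def using x1 a1 by (simp add: field_simps)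
    ultimately show ?thesis using ab by linarith
  next
    case False
    have "\<exists>k. u - T1 \<le> 2^(k+1) * T1"
    proof -
      obtain k where "(u - T1) / T1 < 2^k" using real_arch_pow[of 2 "(u - T1)/T1"] by auto
      then have "u - T1 < 2^k * T1" using T1 by (simp add: field_simps)
      also have "\<dots> \<le> 2^(k+1) * T1" using T1 by simp
      finally show ?thesis by (intro exI[of _ k]) simp
    qed
    define k where "k = (LEAST k. u - T1 \<le> 2^(k+1) * T1)"
    have k1: "u - T1 \<le> 2^(k+1) * T1" unfolding k_def by (rule LeastI_ex) fact
    have k2: "2^k * T1 \<le> u"
    proof (cases k)
      case 0 then show ?thesis using False by simp
    next
      case (Suc k')
      then have "\<not> (u - T1 \<le> 2^(k'+1) * T1)" unfolding k_def
        by (metis Suc k_def lessI not_less_Least)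
      then show ?thesis using Suc T1 by simp
    qed
    have tb: "\<bar>W u \<omega> - W T1 \<omega>\<bar> \<le> (1/2) * (2^k*T1) powr \<kappa>"
      using tailb[OF \<omega>, of u k] k1 False by simp
    have "(2^k*T1) powr \<kappa> \<le> (u + s + 1) powr \<kappa>"
      using k2 s0 kappa T1 by (intro powr_mono2) auto
    moreover have "\<bar>x * a + W T1 \<omega>\<bar> \<le> \<eta>/4" using atT1[OF \<omega>] .
    moreover have "\<bar>x * a + W u \<omega>\<bar> \<le> \<bar>x * a + W T1 \<omega>\<bar> + \<bar>W u \<omega> - W T1 \<omega>\<bar>" by linarith
    ultimately have "\<bar>x * a + W u \<omega>\<bar> \<le> \<eta>/4 + (1/2) * (u + s + 1) powr \<kappa>"
      using tb by linarith
    moreover have "\<eta>/4 < (1/2) * (u + s + 1) powr \<kappa>" using eta_le ab a1 by linarith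
    ultimately show ?thesis by linarith
  qed
qed

end

lemma term_alg: assumes T1: "0 < (T1::real)" and pos: "0 < P" and Q: "0 < Q"
  shows "150000 * (4 * 4 ^ k * T1\<^sup>2) / ((1 / 2) ^ 4 * (P ^ k * Q)) = 9600000 * (T1\<^sup>2 / Q) * (4 / P) ^ k"
  using T1 pos Q by (simp add: power_divide field_simps)

lemma term_eq:
  fixes T1 \<kappa> :: real
  assumes T1: "0 < T1"
  shows "150000 * (2^(k+1) * T1)^2 / ((1/2) * (2^k * T1) powr \<kappa>)^4
       = 9600000 * T1 powr (2 - 4*\<kappa>) * (4 / 2 powr (4*\<kappa>))^k"
proof -
  have y: "0 < 2^k * T1" using T1 by simp
  have p4: "((2^k * T1) powr \<kappa>)^4 = (2^k * T1) powr (4*\<kappa>)"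
    using powr_power[of "2^k*T1" \<kappa> 4] T1 by simp
  have pm: "(2^k * T1) powr (4*\<kappa>) = (2 powr (4*\<kappa>))^k * T1 powr (4*\<kappa>)"
  proof -
    have "(2^k * T1) powr (4*\<kappa>) = (2^k) powr (4*\<kappa>) * T1 powr (4*\<kappa>)"
      using T1 by (simp add: powr_mult)
    moreover have "((2::real)^k) powr (4*\<kappa>) = (2 powr (4*\<kappa>))^k"
    proof -
      have "((2::real)^k) powr (4*\<kappa>) = (2 powr real k) powr (4*\<kappa>)" by (simp add: powr_realpow)
      also have "\<dots> = 2 powr (real k * (4*\<kappa>))" by (simp add: powr_powr)
      also have "\<dots> = (2 powr (4*\<kappa>))^k" by (simp add: powr_power mult.commute)
      finally show ?thesis .
    qed
    ultimately show ?thesis by simp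
  qed
  have t2: "T1 powr (2 - 4*\<kappa>) = T1^2 / T1 powr (4*\<kappa>)"
    using T1 by (simp add: powr_diff powr_numeral)
  have sq: "(2^(k+1) * T1)^2 = 4 * 4^k * T1^2"
  proof -
    have "((2::real)^(k+1))^2 = (2^2)^(k+1)" by (metis power_mult mult.commute)
    then show ?thesis by (simp add: power_mult_distrib)
  qed
  have pos: "0 < 2 powr (4*\<kappa>)" by simp
  show ?thesis
    unfolding sq unfolding power_mult_distrib p4 pm t2
    by (rule term_alg[OF T1 pos]) (use T1 in simp)
qed

lemma tl_exists:
  fixes \<kappa> :: real
  assumes k: "1/2 < \<kappa>"
  shows "\<exists>T1\<ge>1. \<forall>m. (\<Sum>k\<le>m. 150000 * (2^(k+1) * T1)^2 / ((1/2) * (2^k * T1) powr \<kappa>)^4) \<le> 1/2"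
proof -
  define \<rho> where "\<rho> = 4 / 2 powr (4*\<kappa>)"
  have "(2::real) powr 2 < 2 powr (4*\<kappa>)" using k by (intro powr_less_mono) auto
  then have g4: "4 < (2::real) powr (4*\<kappa>)" by simp
  have \<rho>: "0 < \<rho>" "\<rho> < 1" unfolding \<rho>_def using g4 by auto
  define \<epsilon> where "\<epsilon> = (1 - \<rho>) / 19200000"
  have \<epsilon>: "0 < \<epsilon>" unfolding \<epsilon>_def using \<rho> by simp
  have "((\<lambda>T. T powr (2 - 4*\<kappa>)) \<longlongrightarrow> (0::real)) at_top"
    by (rule tendsto_neg_powr) (use k in simp, rule filterlim_ident)
  then have "eventually (\<lambda>T. T powr (2 - 4*\<kappa>) < \<epsilon>) at_top"
    using \<epsilon> by (rule order_tendstoD)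
  then obtain T0 where T0: "\<And>T. T0 \<le> T \<Longrightarrow> T powr (2 - 4*\<kappa>) < \<epsilon>"
    by (auto simp: eventually_at_top_linorder)
  define T1 where "T1 = max T0 1"
  have T1: "1 \<le> T1" "T1 powr (2 - 4*\<kappa>) < \<epsilon>" using T0[of T1] by (auto simp: T1_def)
  show ?thesis
  proof (intro exI[of _ T1] conjI allI)
    fix m
    have "(\<Sum>k\<le>m. 150000 * (2^(k+1) * T1)^2 / ((1/2) * (2^k * T1) powr \<kappa>)^4)
        = (\<Sum>k\<le>m. 9600000 * T1 powr (2 - 4*\<kappa>) * \<rho>^k)"
      unfolding \<rho>_def using T1 by (intro sum.cong refl term_eq) auto
    also have "\<dots> = 9600000 * T1 powr (2 - 4*\<kappa>) * (\<Sum>k\<le>m. \<rho>^k)"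
      by (simp add: sum_distrib_left)
    also have "(\<Sum>k\<le>m. \<rho>^k) = (1 - \<rho>^Suc m) / (1 - \<rho>)"
      using sum_gp_strict[of \<rho> "Suc m"] \<rho> by (simp add: lessThan_Suc_atMost)
    also have "\<dots> \<le> 1 / (1 - \<rho>)" using \<rho> by (intro divide_right_mono) auto
    finally have "(\<Sum>k\<le>m. 150000 * (2^(k+1) * T1)^2 / ((1/2) * (2^k * T1) powr \<kappa>)^4)
        \<le> 9600000 * T1 powr (2 - 4*\<kappa>) * (1 / (1 - \<rho>))"
      by (simp add: mult_left_mono)
    also have "\<dots> \<le> 9600000 * \<epsilon> * (1 / (1 - \<rho>))"
      using T1 \<rho> by (intro mult_right_mono mult_left_mono) auto
    also have "\<dots> = 1/2" unfolding \<epsilon>_def using \<rho> by simp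
    finally show "(\<Sum>k\<le>m. 150000 * (2^(k+1) * T1)^2 / ((1/2) * (2^k * T1) powr \<kappa>)^4) \<le> 1/2" .
  qed (use T1 in simp)
qed

lemma blk_alg:
  fixes q T1 a \<eta> x :: real
  assumes q: "1 \<le> q" and T1: "1 \<le> T1" and a: "1 \<le> a" and \<eta>: "0 < \<eta>" "\<eta> \<le> a" and x: "\<bar>x\<bar> < 1"
  shows "\<eta> * exp (- ((a + \<eta>)^2)) / (2 * sqrt (2*pi*T1)) / q - 150000 * 256 * T1^2 / \<eta>^4 / q^4
     \<le> 2 * (\<eta>/(4*q^2)) * (1 / sqrt (2*pi*(T1/q^2)) * exp (- ((abs (- (x*a)/q^2) + \<eta>/(4*q^2))^2) / (2*(T1/q^2))))
       - 150000*(T1/q^2)^2/(\<eta>/4)^4"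
proof -
  have q0: "0 < q" using q by simp
  have sq: "sqrt (2*pi*(T1/q^2)) = sqrt (2*pi*T1) / q"
    using q0 by (simp add: real_sqrt_divide)
  have st: "0 < sqrt (2*pi*T1)" using T1 by simp
  have e1: "2 * (\<eta>/(4*q^2)) * (1 / sqrt (2*pi*(T1/q^2))) = \<eta> / (2 * sqrt (2*pi*T1)) / q"
    unfolding sq using q0 st by (simp add: field_simps power2_eq_square)
  have arg: "(abs (- (x*a)/q^2) + \<eta>/(4*q^2))^2 / (2*(T1/q^2)) \<le> (a + \<eta>)^2"
  proof -
    have "abs (- (x*a)/q^2) + \<eta>/(4*q^2) = (\<bar>x\<bar> * a + \<eta>/4) / q^2"
      using q0 a by (simp add: abs_mult field_simps)
    then have "(abs (- (x*a)/q^2) + \<eta>/(4*q^2))^2 / (2*(T1/q^2)) = (\<bar>x\<bar> * a + \<eta>/4)^2 / (2 * T1 * q^2)"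
      using q0 T1 by (simp add: power_divide field_simps power2_eq_square)
    also have "\<dots> \<le> (\<bar>x\<bar> * a + \<eta>/4)^2"
    proof -
      have "1 \<le> q^2" using q by (simp add: one_le_power)
      then have "1 * 1 \<le> T1 * q^2" using T1 by (intro mult_mono) auto
      then have D: "1 \<le> 2 * T1 * q^2" by simp
      define X where "X = (\<bar>x\<bar> * a + \<eta>/4)^2"
      have X: "0 \<le> X" unfolding X_def by simp
      have "X * 1 \<le> X * (2 * T1 * q^2)" using X D by (intro mult_left_mono) auto
      then have "X / (2 * T1 * q^2) \<le> X" using D by (simp add: pos_divide_le_eq)
      then show ?thesis unfolding X_def .
    qed
    also have "\<dots> \<le> (a + \<eta>)^2"
    proof -
      have "\<bar>x\<bar> * a \<le> a" using x a by (simp add: mult_left_le_one_le)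
      moreover have "0 \<le> \<bar>x\<bar> * a" using a by simp
      ultimately have "0 \<le> \<bar>x\<bar> * a + \<eta>/4" "\<bar>x\<bar> * a + \<eta>/4 \<le> a + \<eta>" using \<eta> by linarith+
      then show ?thesis by (intro power_mono) auto
    qed
    finally show ?thesis .
  qed
  have ex: "exp (- ((a + \<eta>)^2)) \<le> exp (- ((abs (- (x*a)/q^2) + \<eta>/(4*q^2))^2) / (2*(T1/q^2)))"
    using arg by simp
  have "\<eta> * exp (- ((a + \<eta>)^2)) / (2 * sqrt (2*pi*T1)) / q
      = (\<eta> / (2 * sqrt (2*pi*T1)) / q) * exp (- ((a + \<eta>)^2))" by simp
  also have "\<dots> \<le> (\<eta> / (2 * sqrt (2*pi*T1)) / q) * exp (- ((abs (- (x*a)/q^2) + \<eta>/(4*q^2))^2) / (2*(T1/q^2)))"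
    using ex \<eta> q0 st by (intro mult_left_mono) auto
  also have "\<dots> = 2 * (\<eta>/(4*q^2)) * (1 / sqrt (2*pi*(T1/q^2)) * exp (- ((abs (- (x*a)/q^2) + \<eta>/(4*q^2))^2) / (2*(T1/q^2))))"
    unfolding e1[symmetric] by simp
  finally have 1: "\<eta> * exp (- ((a + \<eta>)^2)) / (2 * sqrt (2*pi*T1)) / q \<le> \<dots>" .
  have 2: "150000*(T1/q^2)^2/(\<eta>/4)^4 = 150000 * 256 * T1^2 / \<eta>^4 / q^4"
    using q0 \<eta> by (simp add: power_divide field_simps power2_eq_square power4_eq_xxxx)
  show ?thesis using 1 2 by linarith
qed

lemma blk_exists:
  fixes T1 a \<eta> x :: real
  assumes T1: "1 \<le> T1" and a: "1 \<le> a" and \<eta>: "0 < \<eta>" "\<eta> \<le> a" and x: "\<bar>x\<bar> < 1"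
  shows "\<exists>p::nat. 0 < 2 * (\<eta> / (4 * 4^p)) * (1 / sqrt (2 * pi * (T1 / 4^p)) * exp (- ((abs (- (x * a) / 4^p) + \<eta> / (4 * 4^p))^2) / (2 * (T1 / 4^p)))) - 150000 * (T1 / 4^p)^2 / (\<eta>/4)^4"
proof -
  define A where "A = \<eta> * exp (- ((a + \<eta>)^2)) / (2 * sqrt (2*pi*T1))"
  define B where "B = 150000 * 256 * T1^2 / \<eta>^4"
  have A: "0 < A" unfolding A_def using \<eta> T1 by simp
  obtain p :: nat where p: "B / A < 8^p" using real_arch_pow[of 8 "B/A"] by auto
  define q :: real where "q = 2^p"
  have q: "1 \<le> q" unfolding q_def by simp
  have q4: "(4::real)^p = q^2"
  proof -
    have "((2::real)^p)^2 = (2^2)^p" by (metis power_mult mult.commute)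
    then show ?thesis unfolding q_def by simp
  qed
  have q8: "(8::real)^p = q^3"
  proof -
    have "((2::real)^p)^3 = (2^3)^p" by (metis power_mult mult.commute)
    then show ?thesis unfolding q_def by simp
  qed
  have "B < A * q^3" using p A q8 by (simp add: field_simps)
  then have "0 < A / q - B / q^4" using q by (simp add: field_simps power3_eq_cube power4_eq_xxxx)
  also have "A / q - B / q^4 \<le> 2 * (\<eta>/(4*q^2)) * (1 / sqrt (2*pi*(T1/q^2)) * exp (- ((abs (- (x*a)/q^2) + \<eta>/(4*q^2))^2) / (2*(T1/q^2))))
       - 150000*(T1/q^2)^2/(\<eta>/4)^4"
    unfolding A_def B_def by (rule blk_alg[OF q T1 a \<eta> x])
  finally show ?thesis unfolding q4[symmetric] by (intro exI[of _ p])
qed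

context bm
begin

lemma Xcont:
  assumes s: "0 \<le> s" and \<omega>: "\<omega> \<in> space M"
  shows "continuous_on {s..} (\<lambda>u. Xproc \<kappa> s x W u \<omega>)"
proof -
  have c1: "continuous_on {s..} (\<lambda>u. W (u - s) \<omega>)"
  proof (rule continuous_on_compose2[OF Wcont[OF \<omega>]])
    show "continuous_on {s..} (\<lambda>u. u - s)" by (intro continuous_intros)
  qed auto
  have c2: "continuous_on {s..} (\<lambda>u. (u + 1) powr \<kappa>)"
    using s by (intro continuous_intros) auto
  show ?thesis unfolding Xproc_def using c1 c2 s
    by (intro continuous_intros) auto
qed

lemma hit_gt:
  assumes s: "0 \<le> s" and \<omega>: "\<omega> \<in> space M"
  shows "ereal t < hit_time \<kappa> s x W \<omega> \<longleftrightarrow> (\<forall>u. s \<le> u \<and> u \<le> t \<longrightarrow> \<bar>Xproc \<kappa> s x W u \<omega>\<bar> \<noteq> 1)"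
proof -
  define S where "S = {u. u \<ge> s \<and> \<bar>Xproc \<kappa> s x W u \<omega>\<bar> = 1}"
  have ht: "hit_time \<kappa> s x W \<omega> = (if S = {} then \<infinity> else ereal (Inf S))"
    unfolding hit_time_def S_def Let_def by simp
  have closedS: "closed S"
  proof -
    have "S = {u \<in> {s..}. \<bar>Xproc \<kappa> s x W u \<omega>\<bar> = 1}" unfolding S_def by auto
    also have "closed \<dots>"
      using Xcont[OF s \<omega>] by (intro continuous_closed_preimage_constant continuous_intros) auto
    finally show ?thesis .
  qed
  have bdd: "bdd_below S" unfolding S_def by (intro bdd_belowI[of _ s]) auto
  show ?thesis
  proof (cases "S = {}")
    case True
    then show ?thesis unfolding ht S_def by auto
  next
    case False
    have InfS: "Inf S \<in> S" using closed_contains_Inf[OF False bdd closedS] .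
    have lower: "Inf S \<le> u" if "u \<in> S" for u using cInf_lower[OF that bdd] .
    show ?thesis
    proof
      assume "ereal t < hit_time \<kappa> s x W \<omega>"
      then have "t < Inf S" using False unfolding ht by simp
      then show "\<forall>u. s \<le> u \<and> u \<le> t \<longrightarrow> \<bar>Xproc \<kappa> s x W u \<omega>\<bar> \<noteq> 1"
        using lower unfolding S_def by force
    next
      assume A: "\<forall>u. s \<le> u \<and> u \<le> t \<longrightarrow> \<bar>Xproc \<kappa> s x W u \<omega>\<bar> \<noteq> 1"
      have "\<not> Inf S \<le> t" using A InfS unfolding S_def by auto
      then show "ereal t < hit_time \<kappa> s x W \<omega>" using False unfolding ht by simp
    qed
  qed
qed

lemma hit_inf: "hit_time \<kappa> s x W \<omega> = \<infinity> \<longleftrightarrow> (\<forall>n::nat. ereal (real n) < hit_time \<kappa> s x W \<omega>)"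
proof
  assume "hit_time \<kappa> s x W \<omega> = \<infinity>" then show "\<forall>n::nat. ereal (real n) < hit_time \<kappa> s x W \<omega>" by simp
next
  assume A: "\<forall>n::nat. ereal (real n) < hit_time \<kappa> s x W \<omega>"
  show "hit_time \<kappa> s x W \<omega> = \<infinity>"
  proof (rule ccontr)
    assume "hit_time \<kappa> s x W \<omega> \<noteq> \<infinity>"
    then obtain r where r: "hit_time \<kappa> s x W \<omega> = ereal r"
      unfolding hit_time_def Let_def by (auto split: if_splits)
    obtain n :: nat where "r < real n" using reals_Archimedean2 by blast
    then show False using A[rule_format, of n] r by simp
  qed
qed

lemma nohit_char:
  assumes s: "0 \<le> s" and st: "s \<le> t" and \<omega>: "\<omega> \<in> space M"
  shows "(\<forall>u. s \<le> u \<and> u \<le> t \<longrightarrow> \<bar>Xproc \<kappa> s x W u \<omega>\<bar> \<noteq> 1) \<longleftrightarrow>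
     (\<exists>k::nat. \<forall>r::nat. \<forall>i::nat. i \<le> 2^r \<longrightarrow> 1 / (real k + 1) \<le> \<bar>\<bar>Xproc \<kappa> s x W (s + real i * (t - s) / 2^r) \<omega>\<bar> - 1\<bar>)"
proof -
  define G where "G u = \<bar>\<bar>Xproc \<kappa> s x W u \<omega>\<bar> - 1\<bar>" for u
  have Gc: "continuous_on {s..t} G"
  proof -
    have "continuous_on {s..t} (\<lambda>u. Xproc \<kappa> s x W u \<omega>)"
      using Xcont[OF s \<omega>] by (rule continuous_on_subset) auto
    then show ?thesis unfolding G_def by (intro continuous_intros)
  qed
  have pts: "s + real i * (t - s) / 2^r \<in> {s..t}" if "i \<le> 2^r" for i r :: nat
  proof -
    have "real i \<le> 2^r" using that by (metis of_nat_le_iff of_nat_numeral of_nat_power)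
    then have "real i * (t - s) \<le> 2^r * (t - s)" using st by (intro mult_right_mono) auto
    then have "real i * (t - s) / 2^r \<le> t - s" by (simp add: pos_divide_le_eq mult.commute)
    moreover have "0 \<le> real i * (t - s) / 2^r" using st by simp
    ultimately show ?thesis by simp
  qed
  show ?thesis
  proof
    assume A: "\<forall>u. s \<le> u \<and> u \<le> t \<longrightarrow> \<bar>Xproc \<kappa> s x W u \<omega>\<bar> \<noteq> 1"
    obtain u0 where u0: "u0 \<in> {s..t}" "\<And>y. y \<in> {s..t} \<Longrightarrow> G u0 \<le> G y"
      using continuous_attains_inf[OF compact_Icc _ Gc] st by auto
    have "0 < G u0" using A u0(1) unfolding G_def by auto
    then obtain k where k: "inverse (real (Suc k)) < G u0" using reals_Archimedean by blast
    show "\<exists>k::nat. \<forall>r::nat. \<forall>i::nat. i \<le> 2^r \<longrightarrow> 1 / (real k + 1) \<le> \<bar>\<bar>Xproc \<kappa> s x W (s + real i * (t - s) / 2^r) \<omega>\<bar> - 1\<bar>"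
    proof (intro exI[of _ k] allI impI)
      fix r i :: nat assume "i \<le> 2^r"
      then have "G u0 \<le> G (s + real i * (t - s) / 2^r)" using u0(2) pts by blast
      then show "1 / (real k + 1) \<le> \<bar>\<bar>Xproc \<kappa> s x W (s + real i * (t - s) / 2^r) \<omega>\<bar> - 1\<bar>"
        using k unfolding G_def by (simp add: inverse_eq_divide add.commute)
    qed
  next
    assume "\<exists>k::nat. \<forall>r::nat. \<forall>i::nat. i \<le> 2^r \<longrightarrow> 1 / (real k + 1) \<le> \<bar>\<bar>Xproc \<kappa> s x W (s + real i * (t - s) / 2^r) \<omega>\<bar> - 1\<bar>"
    then obtain k :: nat where k: "\<And>r i. i \<le> (2::nat)^r \<Longrightarrow> 1 / (real k + 1) \<le> G (s + real i * (t - s) / 2^r)"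
      unfolding G_def by blast
    show "\<forall>u. s \<le> u \<and> u \<le> t \<longrightarrow> \<bar>Xproc \<kappa> s x W u \<omega>\<bar> \<noteq> 1"
    proof (intro allI impI)
      fix u assume u: "s \<le> u \<and> u \<le> t"
      have "(\<lambda>v. 1 / (real k + 1) - G v) u \<le> 0"
      proof (rule dyadic_closed[OF st, of "\<lambda>v. 1 / (real k + 1) - G v" 0 u])
        show "continuous_on {s..t} (\<lambda>v. 1 / (real k + 1) - G v)" using Gc by (intro continuous_intros)
        show "(\<lambda>v. 1 / (real k + 1) - G v) (s + real i * (t - s) / 2^m) \<le> 0" if "0 \<le> m" "i \<le> 2^m" for m i
          using k[OF that(2)] by simp
        show "u \<in> {s..t}" using u by simp
      qed
      then have "0 < G u" by (smt (verit) divide_pos_pos of_nat_0_le_iff)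
      then show "\<bar>Xproc \<kappa> s x W u \<omega>\<bar> \<noteq> 1" unfolding G_def by auto
    qed
  qed
qed

lemma X_meas:
  assumes "s \<le> u"
  shows "(\<lambda>p. Xproc \<kappa> s (fst p) W u (snd p)) \<in> borel_measurable (borel \<Otimes>\<^sub>M M)"
proof -
  have [measurable]: "W (u - s) \<in> borel_measurable M" using assms by (intro W_meas) simp
  show ?thesis unfolding Xproc_def by measurable
qed

lemma meas_set:
  assumes s: "0 \<le> s"
  shows "{p \<in> space (borel \<Otimes>\<^sub>M M). \<forall>u. s \<le> u \<and> u \<le> t \<longrightarrow> \<bar>Xproc \<kappa> s (fst p) W u (snd p)\<bar> \<noteq> 1} \<in> sets (borel \<Otimes>\<^sub>M M)"
proof (cases "s \<le> t")
  case False
  then have "{p \<in> space (borel \<Otimes>\<^sub>M M). \<forall>u. s \<le> u \<and> u \<le> t \<longrightarrow> \<bar>Xproc \<kappa> s (fst p) W u (snd p)\<bar> \<noteq> 1} = space (borel \<Otimes>\<^sub>M M)"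
    by auto
  then show ?thesis by simp
next
  case True
  have eq: "{p \<in> space (borel \<Otimes>\<^sub>M M). \<forall>u. s \<le> u \<and> u \<le> t \<longrightarrow> \<bar>Xproc \<kappa> s (fst p) W u (snd p)\<bar> \<noteq> 1}
    = {p \<in> space (borel \<Otimes>\<^sub>M M). \<exists>k::nat. \<forall>r::nat. \<forall>i::nat. i \<le> 2^r \<longrightarrow> 1 / (real k + 1) \<le> \<bar>\<bar>Xproc \<kappa> s (fst p) W (s + real i * (t - s) / 2^r) (snd p)\<bar> - 1\<bar>}"
  proof (rule Collect_cong, rule conj_cong[OF refl])
    fix p :: "real \<times> 'a" assume "p \<in> space (borel \<Otimes>\<^sub>M M)"
    then have "snd p \<in> space M" by (auto simp: space_pair_measure)
    then show "((\<forall>u. s \<le> u \<and> u \<le> t \<longrightarrow> \<bar>Xproc \<kappa> s (fst p) W u (snd p)\<bar> \<noteq> 1)) \<longleftrightarrow>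
      ((\<exists>k::nat. \<forall>r::nat. \<forall>i::nat. i \<le> 2^r \<longrightarrow> 1 / (real k + 1) \<le> \<bar>\<bar>Xproc \<kappa> s (fst p) W (s + real i * (t - s) / 2^r) (snd p)\<bar> - 1\<bar>))"
      using nohit_char[OF s True, where \<omega>="snd p" and x="fst p" and \<kappa>=\<kappa>] \<open>p \<in> space (borel \<Otimes>\<^sub>M M)\<close> by simp
  qed
  have [measurable]: "(\<lambda>p. Xproc \<kappa> s (fst p) W (s + real i * (t - s) / 2^r) (snd p)) \<in> borel_measurable (borel \<Otimes>\<^sub>M M)" for i r :: nat
    using True by (intro X_meas) simp
  show ?thesis unfolding eq by measurable
qed

lemma slice_eq:
  "Pair x -` {p \<in> space (borel \<Otimes>\<^sub>M M). P (fst p) (snd p)} = {\<omega>\<in>space M. P x \<omega>}"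
  by (auto simp: space_pair_measure)

lemma hit_gt_ev:
  assumes s: "0 \<le> s"
  shows "{\<omega>\<in>space M. ereal t < hit_time \<kappa> s x W \<omega>} \<in> events"
proof -
  have "{\<omega>\<in>space M. ereal t < hit_time \<kappa> s x W \<omega>} = Pair x -` {p \<in> space (borel \<Otimes>\<^sub>M M). \<forall>u. s \<le> u \<and> u \<le> t \<longrightarrow> \<bar>Xproc \<kappa> s (fst p) W u (snd p)\<bar> \<noteq> 1}"
    using hit_gt[OF s] by (auto simp: space_pair_measure)
  also have "\<dots> \<in> events" by (rule sets_Pair1[OF meas_set[OF s]])
  finally show ?thesis .
qed

lemma hit_gt_meas:
  assumes s: "0 \<le> s"
  shows "(\<lambda>x. measure M {\<omega>\<in>space M. ereal t < hit_time \<kappa> s x W \<omega>}) \<in> borel_measurable borel"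
proof -
  have eq: "{\<omega>\<in>space M. ereal t < hit_time \<kappa> s x W \<omega>} = Pair x -` {p \<in> space (borel \<Otimes>\<^sub>M M). \<forall>u. s \<le> u \<and> u \<le> t \<longrightarrow> \<bar>Xproc \<kappa> s (fst p) W u (snd p)\<bar> \<noteq> 1}" for x
    using hit_gt[OF s] by (auto simp: space_pair_measure)
  have "(\<lambda>x. emeasure M (Pair x -` {p \<in> space (borel \<Otimes>\<^sub>M M). \<forall>u. s \<le> u \<and> u \<le> t \<longrightarrow> \<bar>Xproc \<kappa> s (fst p) W u (snd p)\<bar> \<noteq> 1})) \<in> borel_measurable borel"
    by (rule measurable_emeasure_Pair[OF meas_set[OF s]])
  then have "(\<lambda>x. enn2real (emeasure M (Pair x -` {p \<in> space (borel \<Otimes>\<^sub>M M). \<forall>u. s \<le> u \<and> u \<le> t \<longrightarrow> \<bar>Xproc \<kappa> s (fst p) W u (snd p)\<bar> \<noteq> 1}))) \<in> borel_measurable borel"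
    by measurable
  then show ?thesis unfolding eq[symmetric] measure_def .
qed

end

context bm
begin

lemma hit_inf_ev:
  assumes s: "0 \<le> s"
  shows "{\<omega>\<in>space M. hit_time \<kappa> s x W \<omega> = \<infinity>} \<in> events"
proof -
  have "{\<omega>\<in>space M. hit_time \<kappa> s x W \<omega> = \<infinity>} = (\<Inter>n. {\<omega>\<in>space M. ereal (real n) < hit_time \<kappa> s x W \<omega>})"
    using hit_inf by auto
  also have "\<dots> \<in> events" using hit_gt_ev[OF s] by (intro sets.countable_INT) auto
  finally show ?thesis .
qed

lemma pos_x:
  assumes k: "1/2 < \<kappa>" and s: "0 \<le> s" and x: "\<bar>x\<bar> < 1"
  shows "0 < measure M {\<omega>\<in>space M. hit_time \<kappa> s x W \<omega> = \<infinity>}"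
proof -
  define a where "a = (s+1) powr \<kappa>"
  define \<eta> where "\<eta> = (1 - \<bar>x\<bar>) * a / 2"
  have a1: "1 \<le> a" unfolding a_def using s k by (intro ge_one_powr_ge_zero) auto
  have \<eta>: "0 < \<eta>" "\<eta> \<le> a" unfolding \<eta>_def using a1 x by (auto simp: field_simps)
  obtain T1 where T1: "1 \<le> T1" and tl: "\<And>m. (\<Sum>k\<le>m. 150000 * (2^(k+1) * T1)^2 / ((1/2) * (2^k * T1) powr \<kappa>)^4) \<le> 1/2"
    using tl_exists[OF k] by blast
  obtain p :: nat where blk: "0 < 2 * (\<eta> / (4 * 4^p)) * (1 / sqrt (2 * pi * (T1 / 4^p)) * exp (- ((abs (- (x * a) / 4^p) + \<eta> / (4 * 4^p))^2) / (2 * (T1 / 4^p)))) - 150000 * (T1 / 4^p)^2 / (\<eta>/4)^4"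
    using blk_exists[OF T1 a1 \<eta> x] by blast
  define \<Delta> where "\<Delta> = T1 / 4^p"
  define d where "d = - (x * a) / 4^p"
  define e where "e = \<eta> / (4 * 4^p)"
  interpret P: posctx M W \<kappa> s x a \<eta> T1 \<Delta> d e p
  proof (unfold_locales)
    show "0 < 2 * e * (1 / sqrt (2 * pi * \<Delta>) * exp (- ((abs d + e)^2) / (2 * \<Delta>))) - 150000 * \<Delta>^2 / (\<eta>/4)^4"
      using blk unfolding \<Delta>_def d_def e_def .
  qed (use k s x T1 tl in \<open>auto simp: a_def \<eta>_def \<Delta>_def d_def e_def\<close>)
  define G where "G = (\<Inter>m. P.F m)"
  have Gev: "G \<in> events" unfolding G_def using P.F_ev by (intro sets.countable_INT) auto
  have Gpos: "0 < prob G" unfolding G_def by (rule P.F_lim)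
  have Gsub: "G \<subseteq> {\<omega>\<in>space M. hit_time \<kappa> s x W \<omega> = \<infinity>}"
  proof
    fix \<omega> assume \<omega>: "\<omega> \<in> G"
    then have sp: "\<omega> \<in> space M" using Gev sets.sets_into_space by blast
    have "{t. t \<ge> s \<and> \<bar>Xproc \<kappa> s x W t \<omega>\<bar> = 1} = {}"
    proof -
      have "\<bar>Xproc \<kappa> s x W t \<omega>\<bar> < 1" if t: "s \<le> t" for t
      proof -
        have "\<bar>x * a + W (t - s) \<omega>\<bar> < (t - s + s + 1) powr \<kappa>"
          using P.good[of \<omega> "t - s"] \<omega> t unfolding G_def by simp
        moreover have "0 < (t + 1) powr \<kappa>" using t s by simp
        ultimately show ?thesis unfolding Xproc_def a_def
          by (simp add: abs_div divide_less_eq mult.commute)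
      qed
      then show ?thesis by force
    qed
    then have "hit_time \<kappa> s x W \<omega> = \<infinity>" unfolding hit_time_def Let_def by simp
    then show "\<omega> \<in> {\<omega>\<in>space M. hit_time \<kappa> s x W \<omega> = \<infinity>}" using sp by simp
  qed
  have "prob G \<le> prob {\<omega>\<in>space M. hit_time \<kappa> s x W \<omega> = \<infinity>}"
    by (rule finite_measure_mono[OF Gsub hit_inf_ev[OF s]])
  then show ?thesis using Gpos by simp
qed

end

theorem lemma1:
  fixes \<kappa> s :: real and \<mu> :: "real measure" and M :: "'a measure"
    and W :: "real \<Rightarrow> 'a \<Rightarrow> real"
  assumes "\<kappa> > 1/2"
    and "std_BM M W"
    and "s \<ge> 0"
    and "prob_space \<mu>" and "sets \<mu> = sets borel" and "emeasure \<mu> {-1<..<1} = 1"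
  shows "((\<lambda>t. Pmix M \<mu> (\<lambda>x \<omega>. hit_time \<kappa> s x W \<omega> > ereal t))
            \<longlongrightarrow> Pmix M \<mu> (\<lambda>x \<omega>. hit_time \<kappa> s x W \<omega> = \<infinity>)) at_top
         \<and> Pmix M \<mu> (\<lambda>x \<omega>. hit_time \<kappa> s x W \<omega> = \<infinity>) > 0"
proof -
  interpret bm M W by unfold_locales (rule assms(2))
  interpret mu: prob_space \<mu> by (rule assms(4))
  have k: "1/2 < \<kappa>" and s: "0 \<le> s" using assms by auto
  define f where "f t x = measure M {\<omega>\<in>space M. ereal t < hit_time \<kappa> s x W \<omega>}" for t x
  define g where "g x = measure M {\<omega>\<in>space M. hit_time \<kappa> s x W \<omega> = \<infinity>}" for x
  have P1: "Pmix M \<mu> (\<lambda>x \<omega>. hit_time \<kappa> s x W \<omega> > ereal t) = integral\<^sup>L \<mu> (f t)" for t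
    unfolding Pmix_def f_def by simp
  have P2: "Pmix M \<mu> (\<lambda>x \<omega>. hit_time \<kappa> s x W \<omega> = \<infinity>) = integral\<^sup>L \<mu> g"
    unfolding Pmix_def g_def by simp
  have fm: "f t \<in> borel_measurable \<mu>" for t
    unfolding f_def using hit_gt_meas[OF s, of t \<kappa>] measurable_cong_sets[OF assms(5) refl] by blast
  have seq: "(\<lambda>n. f (real n) x) \<longlonglongrightarrow> g x" for x
  proof -
    have "(\<lambda>n. measure M {\<omega>\<in>space M. ereal (real n) < hit_time \<kappa> s x W \<omega>}) \<longlonglongrightarrow> measure M (\<Inter>n. {\<omega>\<in>space M. ereal (real n) < hit_time \<kappa> s x W \<omega>})"
    proof (rule finite_Lim_measure_decseq)
      show "range (\<lambda>n. {\<omega>\<in>space M. ereal (real n) < hit_time \<kappa> s x W \<omega>}) \<subseteq> events"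
        using hit_gt_ev[OF s] by auto
      show "decseq (\<lambda>n. {\<omega>\<in>space M. ereal (real n) < hit_time \<kappa> s x W \<omega>})"
        by (rule decseq_SucI) (auto intro: order.strict_trans1[rotated])
    qed
    moreover have "(\<Inter>n. {\<omega>\<in>space M. ereal (real n) < hit_time \<kappa> s x W \<omega>}) = {\<omega>\<in>space M. hit_time \<kappa> s x W \<omega> = \<infinity>}"
      using hit_inf by auto
    ultimately show ?thesis unfolding f_def g_def by simp
  qed
  have gm: "g \<in> borel_measurable \<mu>"
    by (rule borel_measurable_LIMSEQ_real[OF seq fm])
  have mono: "f t' x \<le> f t x" if "t \<le> t'" for t t' x
    unfolding f_def using that hit_gt_ev[OF s]
    by (intro finite_measure_mono) (auto intro: order.strict_trans1[rotated])
  have gle: "g x \<le> f t x" for t x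
    unfolding f_def g_def using hit_gt_ev[OF s] by (intro finite_measure_mono) auto
  have lim: "((\<lambda>t. f t x) \<longlongrightarrow> g x) at_top" for x
  proof (rule decreasing_tendsto)
    show "\<forall>\<^sub>F t in at_top. g x \<le> f t x" using gle by simp
    fix y assume "g x < y"
    then obtain N where N: "f (real N) x < y"
      using seq[of x] by (metis eventually_sequentially order_tendstoD(2) order_refl)
    show "\<forall>\<^sub>F t in at_top. f t x < y"
      unfolding eventually_at_top_linorder
      using N mono by (intro exI[of _ "real N"]) (metis order.strict_trans1)
  qed
  have conv: "((\<lambda>t. integral\<^sup>L \<mu> (f t)) \<longlongrightarrow> integral\<^sup>L \<mu> g) at_top"
  proof (rule integral_dominated_convergence_at_top[where w="\<lambda>_. 1"])
    show "g \<in> borel_measurable \<mu>" by (rule gm)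
    show "f t \<in> borel_measurable \<mu>" for t by (rule fm)
    show "integrable \<mu> (\<lambda>_. 1::real)" by simp
    show "AE x in \<mu>. ((\<lambda>t. f t x) \<longlongrightarrow> g x) at_top" using lim by simp
    show "\<forall>\<^sub>F t in at_top. AE x in \<mu>. norm (f t x) \<le> 1"
      unfolding f_def by (simp add: prob_le_1)
  qed
  have pos: "0 < integral\<^sup>L \<mu> g"
  proof -
    have gint: "integrable \<mu> g"
      by (rule mu.integrable_const_bound[where B=1]) (auto simp: g_def prob_le_1 gm)
    have g0: "AE x in \<mu>. 0 \<le> g x" by (simp add: g_def)
    have "integral\<^sup>L \<mu> g \<noteq> 0"
    proof
      assume "integral\<^sup>L \<mu> g = 0"
      then have ae0: "AE x in \<mu>. g x = 0" using integral_nonneg_eq_0_iff_AE[OF gint g0] by simp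
      have "mu.prob {-1<..<1} = 1" using assms(6) by (simp add: mu.emeasure_eq_measure)
      then have ae1: "AE x in \<mu>. x \<in> {-1<..<1}" by (rule mu.AE_prob_1)
      have "AE x in \<mu>. False"
        using ae0 ae1
      proof eventually_elim
        fix x assume "g x = 0" "x \<in> {-1<..<1::real}"
        then have "\<bar>x\<bar> < 1" by auto
        then have "0 < g x" unfolding g_def using pos_x[OF k s] by blast
        then show False using \<open>g x = 0\<close> by simp
      qed
      then show False by (simp add: mu.AE_False)
    qed
    moreover have "0 \<le> integral\<^sup>L \<mu> g" using g0 by (rule integral_nonneg_AE)
    ultimately show ?thesis by simp
  qed
  show ?thesis unfolding P1 P2 using conv pos by simp
qed

end
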